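(* Let $D\subseteq\mathbb{R}^3\setminus\{0\}$ be open, $\Omega=\mathbb{R}^3\times D$, and let $\vec\mu=(\mu_1,\mu_2,\mu_3):\Omega\to\mathbb{R}^3$ be smooth. Then $\Pi_{\vec\mu}$ defines a Poisson bracket on $\Omega$ (i.e. $\{f,g\}_{\vec\mu}=(\nabla f)^T\Pi_{\vec\mu}\nabla g$ satisfies the Jacobi identity) if and only if there is a smooth $\vec\nu:D\times\mathbb{R}\to\mathbb{R}^3$ with $\vec\mu(\vec M,\vec\gamma)=\vec\nu(\vec\gamma,\vec M\cdot\vec\gamma)$ and $\vec\nu$ satisfies the Jacobi condition equation $$\vec\gamma\cdot \operatorname{curl}_{\vec\gamma}\vec\nu(\vec\gamma,s)+\vec\nu(\vec\gamma,s)\cdot\big(\vec\gamma\times \partial_s\vec\nu(\vec\gamma,s)\big)=0\quad\text{for all }(\vec\gamma,s)\in D\times\mathbb{R},$$ where $\operatorname{curl}_{\vec\gamma}$ is the curl with respect to $\vec\gamma$ with $s$ held fixed.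
   Context: Coordinates on $\mathbb{R}^6$ are $(\vec M,\vec\gamma)=(M_1,M_2,M_3,\gamma_1,\gamma_2,\gamma_3)$. For a smooth $\vec\mu=(\mu_1,\mu_2,\mu_3)$ of $(\vec M,\vec\gamma)$, $\Pi_{\vec\mu}$ is the skew-symmetric $6\times6$ matrix $$\Pi_{\vec\mu}=\begin{bmatrix}0&-M_3-\mu_3&M_2+\mu_2&0&-\gamma_3&\gamma_2\\ M_3+\mu_3&0&-M_1-\mu_1&\gamma_3&0&-\gamma_1\\ -M_2-\mu_2&M_1+\mu_1&0&-\gamma_2&\gamma_1&0\\ 0&-\gamma_3&\gamma_2&0&0&0\\ \gamma_3&0&-\gamma_1&0&0&0\\ -\gamma_2&\gamma_1&0&0&0&0\end{bmatrix},$$ and $\{f,g\}_{\vec\mu}=(\nabla f)^T\Pi_{\vec\mu}\nabla g$ for smooth $f,g$ (gradient in all six variables). *)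

theory Defs
  imports "HOL-Analysis.Analysis"
begin

definition dirderiv :: "'a::real_normed_vector \<Rightarrow> ('a \<Rightarrow> real) \<Rightarrow> 'a \<Rightarrow> real" where
  "dirderiv v f x = deriv (\<lambda>t. f (x + t *\<^sub>R v)) 0"

fun iterpd :: "'a::real_normed_vector list \<Rightarrow> ('a \<Rightarrow> real) \<Rightarrow> 'a \<Rightarrow> real" where
  "iterpd [] f = f"
| "iterpd (v # vs) f = dirderiv v (iterpd vs f)"

(* C^infinity on an open set: all iterated partial derivatives (w.r.t. the
   standard coordinates, i.e. the Basis) exist and are continuous on U. *)
definition smooth_on :: "'a::euclidean_space set \<Rightarrow> ('a \<Rightarrow> real) \<Rightarrow> bool" where
  "smooth_on U f \<longleftrightarrow>
     (\<forall>bs. set bs \<subseteq> Basis \<longrightarrow>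
        continuous_on U (iterpd bs f) \<and>
        (\<forall>b\<in>Basis. \<forall>x\<in>U. (\<lambda>t. iterpd bs f (x + t *\<^sub>R b)) differentiable (at 0)))"

definition smooth_vec_on :: "'a::euclidean_space set \<Rightarrow> ('a \<Rightarrow> real^3) \<Rightarrow> bool" where
  "smooth_vec_on U F \<longleftrightarrow> (\<forall>i. smooth_on U (\<lambda>x. F x $ i))"

(* Points of R^6 are written (M, gamma) with M, gamma in R^3. *)
definition ax3 :: "nat \<Rightarrow> real^3" where
  "ax3 k = (if k = 1 then axis 1 1 else if k = 2 then axis 2 1 else axis 3 1)"

definition e6 :: "nat \<Rightarrow> (real^3) \<times> (real^3)" where
  "e6 k = (if k \<le> 3 then (ax3 k, 0) else (0, ax3 (k - 3)))"

definition grad6 :: "((real^3) \<times> (real^3) \<Rightarrow> real) \<Rightarrow> (real^3) \<times> (real^3) \<Rightarrow> nat \<Rightarrow> real" where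
  "grad6 f p k = dirderiv (e6 k) f p"

definition PiMat :: "((real^3) \<times> (real^3) \<Rightarrow> real^3) \<Rightarrow> (real^3) \<times> (real^3) \<Rightarrow> nat \<Rightarrow> nat \<Rightarrow> real" where
  "PiMat mu p i j =
    (let M = fst p; g = snd p; m = mu p;
         A = [[0, -(M$3 + m$3), M$2 + m$2, 0, -(g$3), g$2],
              [M$3 + m$3, 0, -(M$1 + m$1), g$3, 0, -(g$1)],
              [-(M$2 + m$2), M$1 + m$1, 0, -(g$2), g$1, 0],
              [0, -(g$3), g$2, 0, 0, 0],
              [g$3, 0, -(g$1), 0, 0, 0],
              [-(g$2), g$1, 0, 0, 0, 0]]
     in A ! (i - 1) ! (j - 1))"

definition pbracket :: "((real^3) \<times> (real^3) \<Rightarrow> real^3) \<Rightarrow> ((real^3) \<times> (real^3) \<Rightarrow> real)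
     \<Rightarrow> ((real^3) \<times> (real^3) \<Rightarrow> real) \<Rightarrow> (real^3) \<times> (real^3) \<Rightarrow> real" where
  "pbracket mu f g p = (\<Sum>i=1..6. \<Sum>j=1..6. grad6 f p i * PiMat mu p i j * grad6 g p j)"

definition jacobi_on :: "((real^3) \<times> (real^3)) set \<Rightarrow> ((real^3) \<times> (real^3) \<Rightarrow> real^3) \<Rightarrow> bool" where
  "jacobi_on Omega mu \<longleftrightarrow>
     (\<forall>f g h. smooth_on Omega f \<and> smooth_on Omega g \<and> smooth_on Omega h \<longrightarrow>
        (\<forall>p\<in>Omega. pbracket mu f (pbracket mu g h) p + pbracket mu g (pbracket mu h f) p
                   + pbracket mu h (pbracket mu f g) p = 0))"

(* For nu : D x R -> R^3, variables (gamma, s). *)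
definition dgam :: "nat \<Rightarrow> ((real^3) \<times> real \<Rightarrow> real^3) \<Rightarrow> 3 \<Rightarrow> (real^3) \<times> real \<Rightarrow> real" where
  "dgam j nu i q = dirderiv (ax3 j, 0) (\<lambda>x. nu x $ i) q"

definition curl_gam :: "((real^3) \<times> real \<Rightarrow> real^3) \<Rightarrow> (real^3) \<times> real \<Rightarrow> real^3" where
  "curl_gam nu q = vector [dgam 2 nu 3 q - dgam 3 nu 2 q,
                           dgam 3 nu 1 q - dgam 1 nu 3 q,
                           dgam 1 nu 2 q - dgam 2 nu 1 q]"

definition ds_vec :: "((real^3) \<times> real \<Rightarrow> real^3) \<Rightarrow> (real^3) \<times> real \<Rightarrow> real^3" where
  "ds_vec nu q = (\<chi> i. dirderiv (0, 1) (\<lambda>x. nu x $ i) q)"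

end

theory Submission
  imports Defs
begin

lemma iterpd_append: "iterpd (bs @ [b]) f = iterpd bs (dirderiv b f)"
  by (induction bs) auto

lemma smooth_onD_cont: "smooth_on U f \<Longrightarrow> continuous_on U f"
  unfolding smooth_on_def by (metis empty_subsetI iterpd.simps(1) list.set(1))

lemma smooth_onD_diff: "smooth_on U f \<Longrightarrow> b \<in> Basis \<Longrightarrow> x \<in> U \<Longrightarrow> (\<lambda>t. f (x + t *\<^sub>R b)) differentiable (at 0)"
  unfolding smooth_on_def by (metis empty_subsetI iterpd.simps(1) list.set(1))

lemma smooth_onD_deriv: "smooth_on U f \<Longrightarrow> b \<in> Basis \<Longrightarrow> smooth_on U (dirderiv b f)"
proof -
  assume f: "smooth_on U f" and b: "b \<in> Basis"
  show ?thesis unfolding smooth_on_def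
  proof (intro allI impI)
    fix bs :: "'a list" assume "set bs \<subseteq> Basis"
    then have "set (bs @ [b]) \<subseteq> Basis" using b by auto
    then show "continuous_on U (iterpd bs (dirderiv b f)) \<and>
        (\<forall>c\<in>Basis. \<forall>x\<in>U. (\<lambda>t. iterpd bs (dirderiv b f) (x + t *\<^sub>R c)) differentiable at 0)"
      using f unfolding smooth_on_def iterpd_append[symmetric] by blast
  qed
qed

lemma smooth_on_coind:
  assumes "h \<in> C" and "\<And>h. h \<in> C \<Longrightarrow> continuous_on U h"
    and "\<And>h b x. h \<in> C \<Longrightarrow> b \<in> Basis \<Longrightarrow> x \<in> U \<Longrightarrow> (\<lambda>t. h (x + t *\<^sub>R b)) differentiable (at 0)"
    and "\<And>h b. h \<in> C \<Longrightarrow> b \<in> Basis \<Longrightarrow> dirderiv b h \<in> C"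
  shows "smooth_on U h"
proof -
  have "set bs \<subseteq> Basis \<Longrightarrow> iterpd bs h \<in> C" for bs by (induction bs) (auto simp: assms)
  then show ?thesis unfolding smooth_on_def using assms by auto
qed

lemma dirderiv_DERIV:
  assumes "(\<lambda>t. f (x + t *\<^sub>R v)) differentiable (at 0)"
  shows "((\<lambda>t. f (x + t *\<^sub>R v)) has_real_derivative dirderiv v f x) (at 0)"
  using assms unfolding dirderiv_def by (simp add: DERIV_deriv_iff_real_differentiable)

lemma dirderiv_DERIV_shift:
  assumes "(\<lambda>t. f ((x + s *\<^sub>R v) + t *\<^sub>R v)) differentiable (at 0)"
  shows "((\<lambda>t. f (x + t *\<^sub>R v)) has_real_derivative dirderiv v f (x + s *\<^sub>R v)) (at s)"
proof -
  have "((\<lambda>t. f ((x + s *\<^sub>R v) + t *\<^sub>R v)) has_real_derivative dirderiv v f (x + s *\<^sub>R v)) (at 0)"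
    by (rule dirderiv_DERIV[OF assms])
  then have "((\<lambda>t. f (x + (t + s) *\<^sub>R v)) has_real_derivative dirderiv v f (x + s *\<^sub>R v)) (at 0)"
    by (simp add: scaleR_add_left algebra_simps)
  then show ?thesis using DERIV_shift[of "\<lambda>t. f (x + t *\<^sub>R v)" _ 0 s] by simp
qed

lemma dirderiv_cong:
  assumes "open U" "x \<in> U" "\<And>y. y \<in> U \<Longrightarrow> f y = g y"
  shows "dirderiv v f x = dirderiv v g x"
proof -
  have "eventually (\<lambda>t. x + t *\<^sub>R v \<in> U) (nhds (0::real))"
  proof -
    have "continuous_on UNIV (\<lambda>t::real. x + t *\<^sub>R v)" by (intro continuous_intros)
    then have "open ((\<lambda>t::real. x + t *\<^sub>R v) -` U)"
      using assms(1) open_vimage by blast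
    then have "\<forall>\<^sub>F t in nhds 0. t \<in> (\<lambda>t. x + t *\<^sub>R v) -` U"
      using assms(2) by (intro eventually_nhds_in_open) auto
    then show ?thesis by simp
  qed
  then have "eventually (\<lambda>t. f (x + t *\<^sub>R v) = g (x + t *\<^sub>R v)) (nhds (0::real))"
    by eventually_elim (use assms in auto)
  then show ?thesis unfolding dirderiv_def by (rule deriv_cong_ev) simp
qed

lemma MVT_sym:
  fixes \<phi> :: "real \<Rightarrow> real"
  assumes "\<And>x. \<bar>x\<bar> \<le> \<bar>h\<bar> \<Longrightarrow> DERIV \<phi> x :> \<phi>' x"
  shows "\<exists>\<xi>. \<bar>\<xi>\<bar> \<le> \<bar>h\<bar> \<and> \<phi> h - \<phi> 0 = h * \<phi>' \<xi>"
proof (cases h "0::real" rule: linorder_cases)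
  case less
  have "\<exists>z. h < z \<and> z < 0 \<and> \<phi> 0 - \<phi> h = (0 - h) * \<phi>' z"
    by (rule MVT2) (use assms less in auto)
  then obtain z where "h < z" "z < 0" "\<phi> 0 - \<phi> h = (0 - h) * \<phi>' z" by blast
  then show ?thesis by (intro exI[of _ z]) (auto simp: algebra_simps)
next
  case equal then show ?thesis by auto
next
  case greater
  have "\<exists>z. 0 < z \<and> z < h \<and> \<phi> h - \<phi> 0 = (h - 0) * \<phi>' z"
    by (rule MVT2) (use assms greater in auto)
  then obtain z where "0 < z" "z < h" "\<phi> h - \<phi> 0 = (h - 0) * \<phi>' z" by blast
  then show ?thesis by (intro exI[of _ z]) auto
qed


lemma norm_proj_le:
  fixes h :: "'a::euclidean_space"
  assumes "B \<subseteq> Basis"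
  shows "norm (\<Sum>b\<in>B. (h \<bullet> b) *\<^sub>R b) \<le> real (card B) * norm h"
proof -
  have "norm (\<Sum>b\<in>B. (h \<bullet> b) *\<^sub>R b) \<le> (\<Sum>b\<in>B. norm ((h \<bullet> b) *\<^sub>R b))" by (rule norm_sum)
  also have "\<dots> \<le> (\<Sum>b\<in>B. norm h)"
    by (intro sum_mono) (use assms in \<open>auto simp: Basis_le_norm\<close>)
  also have "\<dots> = real (card B) * norm h" by simp
  finally show ?thesis .
qed

lemma C1_frechet:
  fixes f :: "'a::euclidean_space \<Rightarrow> real"
  assumes U: "open U" "x \<in> U"
    and d: "\<And>b y. b \<in> Basis \<Longrightarrow> y \<in> U \<Longrightarrow> (\<lambda>t. f (y + t *\<^sub>R b)) differentiable (at 0)"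
    and c: "\<And>b. b \<in> Basis \<Longrightarrow> continuous_on U (dirderiv b f)"
  shows "(f has_derivative (\<lambda>h. \<Sum>b\<in>Basis. (h \<bullet> b) * dirderiv b f x)) (at x)"
proof -
  obtain r where r: "r > 0" "ball x r \<subseteq> U" using U openE by blast
  have P: "finite B \<Longrightarrow> B \<subseteq> Basis \<Longrightarrow> \<forall>e>0. \<exists>d>0. \<forall>h. norm h < d \<longrightarrow>
      \<bar>f (x + (\<Sum>b\<in>B. (h \<bullet> b) *\<^sub>R b)) - f x - (\<Sum>b\<in>B. (h \<bullet> b) * dirderiv b f x)\<bar> \<le> e * norm h" for B
  proof (induction B rule: finite_induct)
    case empty
    then show ?case by (auto intro!: exI[of _ 1])
  next
    case (insert c B)
    show ?case
    proof (intro allI impI)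
      fix e :: real assume e: "e > 0"
      have cB: "c \<in> Basis" "B \<subseteq> Basis" using insert.prems by auto
      obtain d1 where d1: "d1 > 0" "\<And>h. norm h < d1 \<Longrightarrow>
         \<bar>f (x + (\<Sum>b\<in>B. (h \<bullet> b) *\<^sub>R b)) - f x - (\<Sum>b\<in>B. (h \<bullet> b) * dirderiv b f x)\<bar> \<le> e/2 * norm h"
        using insert.IH[OF cB(2)] e by (meson half_gt_zero)
      have "isCont (dirderiv c f) x" using c[OF cB(1)] U continuous_on_eq_continuous_at by blast
      then obtain d2 where d2: "d2 > 0" "\<And>y. dist y x < d2 \<Longrightarrow> dist (dirderiv c f y) (dirderiv c f x) < e/2"
        using e unfolding continuous_at_eps_delta by (meson half_gt_zero)
      define K where "K = real (card B) + 1"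
      have K: "K \<ge> 1" unfolding K_def by simp
      define d where "d = min d1 (min d2 r / K)"
      have dpos: "d > 0" unfolding d_def using d1 d2 r K by auto
      show "\<exists>d>0. \<forall>h. norm h < d \<longrightarrow>
         \<bar>f (x + (\<Sum>b\<in>insert c B. (h \<bullet> b) *\<^sub>R b)) - f x - (\<Sum>b\<in>insert c B. (h \<bullet> b) * dirderiv b f x)\<bar> \<le> e * norm h"
      proof (intro exI[of _ d] conjI allI impI dpos)
        fix h :: 'a assume h: "norm h < d"
        define y0 where "y0 = x + (\<Sum>b\<in>B. (h \<bullet> b) *\<^sub>R b)"
        have pt: "dist (y0 + \<xi> *\<^sub>R c) x < min d2 r" if "\<bar>\<xi>\<bar> \<le> \<bar>h \<bullet> c\<bar>" for \<xi>
        proof -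
          have "dist (y0 + \<xi> *\<^sub>R c) x = norm ((\<Sum>b\<in>B. (h \<bullet> b) *\<^sub>R b) + \<xi> *\<^sub>R c)"
            unfolding y0_def dist_norm by (metis add.assoc add_diff_cancel_left')
          also have "\<dots> \<le> norm (\<Sum>b\<in>B. (h \<bullet> b) *\<^sub>R b) + norm (\<xi> *\<^sub>R c)" by (rule norm_triangle_ineq)
          also have "\<dots> \<le> real (card B) * norm h + norm h"
            using norm_proj_le[OF cB(2), of h] that Basis_le_norm[OF cB(1), of h] cB(1) by simp
          also have "\<dots> = K * norm h" unfolding K_def by (simp add: algebra_simps)
          also have "\<dots> < K * d" using h K by simp
          also have "\<dots> \<le> K * (min d2 r / K)" unfolding d_def using K
            by (intro mult_left_mono) auto
          also have "\<dots> = min d2 r" using K by simp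
          finally show ?thesis .
        qed
        have inU: "y0 + \<xi> *\<^sub>R c \<in> U" if "\<bar>\<xi>\<bar> \<le> \<bar>h \<bullet> c\<bar>" for \<xi>
          using pt[OF that] r(2) by (auto simp: dist_commute)
        have "\<exists>\<xi>. \<bar>\<xi>\<bar> \<le> \<bar>h \<bullet> c\<bar> \<and> f (y0 + (h \<bullet> c) *\<^sub>R c) - f (y0 + 0 *\<^sub>R c) = (h \<bullet> c) * dirderiv c f (y0 + \<xi> *\<^sub>R c)"
        proof (rule MVT_sym[where \<phi>="\<lambda>t. f (y0 + t *\<^sub>R c)"])
          fix t assume "\<bar>t\<bar> \<le> \<bar>h \<bullet> c\<bar>"
          then show "((\<lambda>t. f (y0 + t *\<^sub>R c)) has_real_derivative dirderiv c f (y0 + t *\<^sub>R c)) (at t)"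
            using d[OF cB(1) inU] by (intro dirderiv_DERIV_shift) auto
        qed
        then obtain \<xi> where \<xi>: "\<bar>\<xi>\<bar> \<le> \<bar>h \<bullet> c\<bar>"
          "f (y0 + (h \<bullet> c) *\<^sub>R c) - f y0 = (h \<bullet> c) * dirderiv c f (y0 + \<xi> *\<^sub>R c)" by auto
        have close: "\<bar>dirderiv c f (y0 + \<xi> *\<^sub>R c) - dirderiv c f x\<bar> \<le> e/2"
          using d2(2)[of "y0 + \<xi> *\<^sub>R c"] pt[OF \<xi>(1)] by (simp add: dist_real_def)
        have A: "\<bar>(h \<bullet> c) * (dirderiv c f (y0 + \<xi> *\<^sub>R c) - dirderiv c f x)\<bar> \<le> norm h * (e/2)"
          unfolding abs_mult using Basis_le_norm[OF cB(1), of h] close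
          by (intro mult_mono) auto
        have B: "\<bar>f y0 - f x - (\<Sum>b\<in>B. (h \<bullet> b) * dirderiv b f x)\<bar> \<le> e/2 * norm h"
          unfolding y0_def using d1(2)[of h] h unfolding d_def by simp
        have eq: "f (x + (\<Sum>b\<in>insert c B. (h \<bullet> b) *\<^sub>R b)) - f x - (\<Sum>b\<in>insert c B. (h \<bullet> b) * dirderiv b f x)
           = (h \<bullet> c) * (dirderiv c f (y0 + \<xi> *\<^sub>R c) - dirderiv c f x) + (f y0 - f x - (\<Sum>b\<in>B. (h \<bullet> b) * dirderiv b f x))"
          using insert.hyps \<xi>(2) unfolding y0_def by (simp add: algebra_simps)
        show "\<bar>f (x + (\<Sum>b\<in>insert c B. (h \<bullet> b) *\<^sub>R b)) - f x - (\<Sum>b\<in>insert c B. (h \<bullet> b) * dirderiv b f x)\<bar> \<le> e * norm h"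
        proof -
          have "norm h * (e/2) + e/2 * norm h = e * norm h" by (simp add: field_simps)
          then show ?thesis unfolding eq
            using A B abs_triangle_ineq[of "(h \<bullet> c) * (dirderiv c f (y0 + \<xi> *\<^sub>R c) - dirderiv c f x)"
                "f y0 - f x - (\<Sum>b\<in>B. (h \<bullet> b) * dirderiv b f x)"] by linarith
        qed
      qed
    qed
  qed
  have PB: "\<forall>e>0. \<exists>d>0. \<forall>h. norm h < d \<longrightarrow>
      \<bar>f (x + h) - f x - (\<Sum>b\<in>Basis. (h \<bullet> b) * dirderiv b f x)\<bar> \<le> e * norm h"
    using P[OF finite_Basis order_refl] by (simp add: euclidean_representation)
  have bl: "bounded_linear (\<lambda>h. \<Sum>b\<in>Basis. (h \<bullet> b) * dirderiv b f x)"
    by (intro bounded_linear_sum bounded_linear_mult_const bounded_linear_inner_left)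
  show ?thesis unfolding has_derivative_at_alt
  proof (intro conjI bl allI impI)
    fix e :: real assume "e > 0"
    then obtain d where "d > 0" "\<forall>h. norm h < d \<longrightarrow>
      \<bar>f (x + h) - f x - (\<Sum>b\<in>Basis. (h \<bullet> b) * dirderiv b f x)\<bar> \<le> e * norm h" using PB by blast
    then show "\<exists>d>0. \<forall>y. norm (y - x) < d \<longrightarrow>
        norm (f y - f x - (\<Sum>b\<in>Basis. ((y - x) \<bullet> b) * dirderiv b f x)) \<le> e * norm (y - x)"
      by (intro exI[of _ d]) (metis add.commute diff_add_cancel real_norm_def)
  qed
qed

lemma C1_chain:
  fixes f :: "'a::euclidean_space \<Rightarrow> real"
  assumes U: "open U" "c t \<in> U"
    and d: "\<And>b y. b \<in> Basis \<Longrightarrow> y \<in> U \<Longrightarrow> (\<lambda>t. f (y + t *\<^sub>R b)) differentiable (at 0)"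
    and cont: "\<And>b. b \<in> Basis \<Longrightarrow> continuous_on U (dirderiv b f)"
    and cd: "(c has_vector_derivative c') (at t)"
  shows "((\<lambda>s. f (c s)) has_real_derivative (\<Sum>b\<in>Basis. (c' \<bullet> b) * dirderiv b f (c t))) (at t)"
proof -
  have F: "(f has_derivative (\<lambda>h. \<Sum>b\<in>Basis. (h \<bullet> b) * dirderiv b f (c t))) (at (c t))"
    by (rule C1_frechet[OF U d cont])
  have "((\<lambda>s. f (c s)) has_derivative (\<lambda>h. (\<Sum>b\<in>Basis. (h *\<^sub>R c' \<bullet> b) * dirderiv b f (c t)))) (at t)"
    using diff_chain_at[OF cd[unfolded has_vector_derivative_def] F] by (simp add: o_def)
  moreover have "(\<lambda>h. (\<Sum>b\<in>Basis. (h *\<^sub>R c' \<bullet> b) * dirderiv b f (c t))) = (*) (\<Sum>b\<in>Basis. (c' \<bullet> b) * dirderiv b f (c t))"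
    by (auto simp: sum_distrib_left algebra_simps)
  ultimately show ?thesis unfolding has_field_derivative_def by simp
qed

lemma C1_dir:
  fixes f :: "'a::euclidean_space \<Rightarrow> real"
  assumes U: "open U" "x \<in> U"
    and d: "\<And>b y. b \<in> Basis \<Longrightarrow> y \<in> U \<Longrightarrow> (\<lambda>t. f (y + t *\<^sub>R b)) differentiable (at 0)"
    and cont: "\<And>b. b \<in> Basis \<Longrightarrow> continuous_on U (dirderiv b f)"
  shows "((\<lambda>s. f (x + s *\<^sub>R w)) has_real_derivative (\<Sum>b\<in>Basis. (w \<bullet> b) * dirderiv b f x)) (at 0)"
proof -
  have cd: "((\<lambda>s. x + s *\<^sub>R w) has_vector_derivative w) (at 0)"
    unfolding has_vector_derivative_def by (auto intro!: derivative_eq_intros)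
  show ?thesis using C1_chain[of U "\<lambda>s. x + s *\<^sub>R w" 0 f w, OF U(1) _ d cont cd] U(2) by simp
qed


lemma schwarz_aux:
  fixes f :: "'a::euclidean_space \<Rightarrow> real"
  assumes U: "ball x r \<subseteq> U" and a: "norm a \<le> 1" and b: "norm b \<le> 1" and hr: "2 * \<bar>h\<bar> < r"
    and da: "\<And>y. y \<in> U \<Longrightarrow> (\<lambda>t. f (y + t *\<^sub>R a)) differentiable (at 0)"
    and dab: "\<And>y. y \<in> U \<Longrightarrow> (\<lambda>t. dirderiv a f (y + t *\<^sub>R b)) differentiable (at 0)"
  shows "\<exists>\<xi>. norm (\<xi> - x) \<le> 2 * \<bar>h\<bar> \<and>
     f (x + h *\<^sub>R a + h *\<^sub>R b) - f (x + h *\<^sub>R a) - f (x + h *\<^sub>R b) + f x = h * h * dirderiv b (dirderiv a f) \<xi>"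
proof -
  have nrm: "norm ((x + s *\<^sub>R a + t *\<^sub>R b) - x) \<le> 2 * \<bar>h\<bar>" if "\<bar>s\<bar> \<le> \<bar>h\<bar>" "\<bar>t\<bar> \<le> \<bar>h\<bar>" for s t
  proof -
    have "norm ((x + s *\<^sub>R a + t *\<^sub>R b) - x) = norm (s *\<^sub>R a + t *\<^sub>R b)" by (simp add: algebra_simps)
    also have "\<dots> \<le> norm (s *\<^sub>R a) + norm (t *\<^sub>R b)" by (rule norm_triangle_ineq)
    also have "\<dots> = \<bar>s\<bar> * norm a + \<bar>t\<bar> * norm b" by simp
    also have "\<dots> \<le> \<bar>h\<bar> * 1 + \<bar>h\<bar> * 1"
      using that a b by (intro add_mono mult_mono) auto
    finally show ?thesis by simp
  qed
  have pt: "x + s *\<^sub>R a + t *\<^sub>R b \<in> U" if "\<bar>s\<bar> \<le> \<bar>h\<bar>" "\<bar>t\<bar> \<le> \<bar>h\<bar>" for s t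
  proof -
    have "dist x (x + s *\<^sub>R a + t *\<^sub>R b) = norm ((x + s *\<^sub>R a + t *\<^sub>R b) - x)"
      by (simp add: dist_norm norm_minus_commute add.commute)
    then have "dist x (x + s *\<^sub>R a + t *\<^sub>R b) < r"
      using nrm[OF that] hr by linarith
    then show ?thesis using U by auto
  qed
  have "\<exists>\<sigma>. \<bar>\<sigma>\<bar> \<le> \<bar>h\<bar> \<and> (\<lambda>s. f (x + h *\<^sub>R b + s *\<^sub>R a) - f (x + s *\<^sub>R a)) h - (\<lambda>s. f (x + h *\<^sub>R b + s *\<^sub>R a) - f (x + s *\<^sub>R a)) 0
      = h * (dirderiv a f (x + h *\<^sub>R b + \<sigma> *\<^sub>R a) - dirderiv a f (x + \<sigma> *\<^sub>R a))"
  proof (rule MVT_sym)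
    fix s assume s: "\<bar>s\<bar> \<le> \<bar>h\<bar>"
    have p1: "x + h *\<^sub>R b + s *\<^sub>R a \<in> U" using pt[OF s, of h] by (simp add: add_ac)
    have p2: "x + s *\<^sub>R a \<in> U" using pt[OF s, of 0] by simp
    show "((\<lambda>s. f (x + h *\<^sub>R b + s *\<^sub>R a) - f (x + s *\<^sub>R a)) has_real_derivative
       dirderiv a f (x + h *\<^sub>R b + s *\<^sub>R a) - dirderiv a f (x + s *\<^sub>R a)) (at s)"
      by (intro DERIV_diff dirderiv_DERIV_shift da p1 p2)
  qed
  then obtain \<sigma> where \<sigma>: "\<bar>\<sigma>\<bar> \<le> \<bar>h\<bar>"
    "f (x + h *\<^sub>R b + h *\<^sub>R a) - f (x + h *\<^sub>R a) - (f (x + h *\<^sub>R b) - f x)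
      = h * (dirderiv a f (x + h *\<^sub>R b + \<sigma> *\<^sub>R a) - dirderiv a f (x + \<sigma> *\<^sub>R a))" by auto
  have "\<exists>\<tau>. \<bar>\<tau>\<bar> \<le> \<bar>h\<bar> \<and> (\<lambda>t. dirderiv a f (x + \<sigma> *\<^sub>R a + t *\<^sub>R b)) h - (\<lambda>t. dirderiv a f (x + \<sigma> *\<^sub>R a + t *\<^sub>R b)) 0
      = h * dirderiv b (dirderiv a f) (x + \<sigma> *\<^sub>R a + \<tau> *\<^sub>R b)"
  proof (rule MVT_sym)
    fix t assume t: "\<bar>t\<bar> \<le> \<bar>h\<bar>"
    show "((\<lambda>t. dirderiv a f (x + \<sigma> *\<^sub>R a + t *\<^sub>R b)) has_real_derivative
       dirderiv b (dirderiv a f) (x + \<sigma> *\<^sub>R a + t *\<^sub>R b)) (at t)"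
      by (intro dirderiv_DERIV_shift dab pt \<sigma>(1) t)
  qed
  then obtain \<tau> where \<tau>: "\<bar>\<tau>\<bar> \<le> \<bar>h\<bar>"
    "dirderiv a f (x + \<sigma> *\<^sub>R a + h *\<^sub>R b) - dirderiv a f (x + \<sigma> *\<^sub>R a)
      = h * dirderiv b (dirderiv a f) (x + \<sigma> *\<^sub>R a + \<tau> *\<^sub>R b)" by auto
  show ?thesis
  proof (intro exI conjI)
    show "norm ((x + \<sigma> *\<^sub>R a + \<tau> *\<^sub>R b) - x) \<le> 2 * \<bar>h\<bar>" by (rule nrm[OF \<sigma>(1) \<tau>(1)])
    have e1: "x + h *\<^sub>R b + h *\<^sub>R a = x + h *\<^sub>R a + h *\<^sub>R b" "x + h *\<^sub>R b + \<sigma> *\<^sub>R a = x + \<sigma> *\<^sub>R a + h *\<^sub>R b"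
      by (simp_all add: add_ac)
    show "f (x + h *\<^sub>R a + h *\<^sub>R b) - f (x + h *\<^sub>R a) - f (x + h *\<^sub>R b) + f x =
      h * h * dirderiv b (dirderiv a f) (x + \<sigma> *\<^sub>R a + \<tau> *\<^sub>R b)"
      using \<sigma>(2) \<tau>(2) unfolding e1 by (simp add: algebra_simps)
  qed
qed

lemma contr_aux: "\<bar>a1 - a\<bar> < e \<Longrightarrow> \<bar>b2 - b\<bar> < e \<Longrightarrow> a1 = b2 \<Longrightarrow> e = \<bar>a - b\<bar> / 2 \<Longrightarrow> False"
  for a1 a b2 b e :: real by (simp add: abs_if split: if_splits)

lemma schwarz:
  fixes f :: "'a::euclidean_space \<Rightarrow> real"
  assumes U: "open U" "x \<in> U" and a: "a \<in> Basis" and b: "b \<in> Basis"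
    and da: "\<And>y. y \<in> U \<Longrightarrow> (\<lambda>t. f (y + t *\<^sub>R a)) differentiable (at 0)"
    and db: "\<And>y. y \<in> U \<Longrightarrow> (\<lambda>t. f (y + t *\<^sub>R b)) differentiable (at 0)"
    and dab: "\<And>y. y \<in> U \<Longrightarrow> (\<lambda>t. dirderiv a f (y + t *\<^sub>R b)) differentiable (at 0)"
    and dba: "\<And>y. y \<in> U \<Longrightarrow> (\<lambda>t. dirderiv b f (y + t *\<^sub>R a)) differentiable (at 0)"
    and cab: "continuous_on U (dirderiv b (dirderiv a f))"
    and cba: "continuous_on U (dirderiv a (dirderiv b f))"
  shows "dirderiv b (dirderiv a f) x = dirderiv a (dirderiv b f) x"
proof (rule ccontr)
  assume ne: "dirderiv b (dirderiv a f) x \<noteq> dirderiv a (dirderiv b f) x"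
  define e where "e = \<bar>dirderiv b (dirderiv a f) x - dirderiv a (dirderiv b f) x\<bar> / 2"
  have e: "e > 0" using ne by (simp add: e_def)
  obtain r where r: "r > 0" "ball x r \<subseteq> U" using U openE by blast
  have "isCont (dirderiv b (dirderiv a f)) x" using cab U continuous_on_eq_continuous_at by blast
  then obtain d1 where d1: "d1 > 0" "\<And>y. dist y x < d1 \<Longrightarrow> dist (dirderiv b (dirderiv a f) y) (dirderiv b (dirderiv a f) x) < e"
    using e unfolding continuous_at_eps_delta by blast
  have "isCont (dirderiv a (dirderiv b f)) x" using cba U continuous_on_eq_continuous_at by blast
  then obtain d2 where d2: "d2 > 0" "\<And>y. dist y x < d2 \<Longrightarrow> dist (dirderiv a (dirderiv b f) y) (dirderiv a (dirderiv b f) x) < e"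
    using e unfolding continuous_at_eps_delta by blast
  define h where "h = min r (min d1 d2) / 4"
  have h: "h > 0" "2 * \<bar>h\<bar> < r" "2 * \<bar>h\<bar> < d1" "2 * \<bar>h\<bar> < d2"
    using r d1 d2 by (auto simp: h_def)
  have na: "norm a \<le> 1" "norm b \<le> 1" using a b by auto
  obtain \<xi>1 where \<xi>1: "norm (\<xi>1 - x) \<le> 2 * \<bar>h\<bar>"
    "f (x + h *\<^sub>R a + h *\<^sub>R b) - f (x + h *\<^sub>R a) - f (x + h *\<^sub>R b) + f x = h * h * dirderiv b (dirderiv a f) \<xi>1"
    using schwarz_aux[OF r(2) na h(2) da dab] by blast
  obtain \<xi>2 where \<xi>2: "norm (\<xi>2 - x) \<le> 2 * \<bar>h\<bar>"
    "f (x + h *\<^sub>R b + h *\<^sub>R a) - f (x + h *\<^sub>R b) - f (x + h *\<^sub>R a) + f x = h * h * dirderiv a (dirderiv b f) \<xi>2"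
    using schwarz_aux[OF r(2) na(2) na(1) h(2) db dba] by blast
  have sw: "x + h *\<^sub>R b + h *\<^sub>R a = x + h *\<^sub>R a + h *\<^sub>R b" by (simp add: add_ac)
  have "h * h * dirderiv b (dirderiv a f) \<xi>1 = h * h * dirderiv a (dirderiv b f) \<xi>2"
    using \<xi>1(2) \<xi>2(2) unfolding sw by linarith
  then have eq: "dirderiv b (dirderiv a f) \<xi>1 = dirderiv a (dirderiv b f) \<xi>2" using h(1) by simp
  have c1: "\<bar>dirderiv b (dirderiv a f) \<xi>1 - dirderiv b (dirderiv a f) x\<bar> < e"
    using d1(2)[of \<xi>1] \<xi>1(1) h(3) by (simp add: dist_norm dist_real_def)
  have c2: "\<bar>dirderiv a (dirderiv b f) \<xi>2 - dirderiv a (dirderiv b f) x\<bar> < e"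
    using d2(2)[of \<xi>2] \<xi>2(1) h(4) by (simp add: dist_norm dist_real_def)
  show False using contr_aux[OF c1 c2 eq e_def] .
qed


lemma sum4_perm_a: "(\<Sum>k\<in>S. \<Sum>l\<in>S. \<Sum>i\<in>S. \<Sum>j\<in>S. f k l i j) = (\<Sum>i\<in>S. \<Sum>j\<in>S. \<Sum>l\<in>S. \<Sum>k\<in>S. f k l i j)"
  unfolding sum.cartesian_product
  by (rule sum.reindex_bij_witness[where i="\<lambda>(i,j,l,k). (k,l,i,j)" and j="\<lambda>(k,l,i,j). (i,j,l,k)"]) auto

lemma sum4_perm_b: "(\<Sum>k\<in>S. \<Sum>l\<in>S. \<Sum>i\<in>S. \<Sum>j\<in>S. f k l i j) = (\<Sum>k\<in>S. \<Sum>i\<in>S. \<Sum>j\<in>S. \<Sum>l\<in>S. f k l i j)"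
  unfolding sum.cartesian_product
  by (rule sum.reindex_bij_witness[where i="\<lambda>(k,i,j,l). (k,l,i,j)" and j="\<lambda>(k,l,i,j). (k,i,j,l)"]) auto

lemma sum4_perm_c: "(\<Sum>k\<in>S. \<Sum>l\<in>S. \<Sum>i\<in>S. \<Sum>j\<in>S. f k l i j) = (\<Sum>j\<in>S. \<Sum>k\<in>S. \<Sum>i\<in>S. \<Sum>l\<in>S. f k l i j)"
  unfolding sum.cartesian_product
  by (rule sum.reindex_bij_witness[where i="\<lambda>(j,k,i,l). (k,l,i,j)" and j="\<lambda>(k,l,i,j). (j,k,i,l)"]) auto

lemma sum4_perm_d: "(\<Sum>k\<in>S. \<Sum>l\<in>S. \<Sum>i\<in>S. \<Sum>j\<in>S. f k l i j) = (\<Sum>i\<in>S. \<Sum>j\<in>S. \<Sum>k\<in>S. \<Sum>l\<in>S. f k l i j)"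
  unfolding sum.cartesian_product
  by (rule sum.reindex_bij_witness[where i="\<lambda>(i,j,k,l). (k,l,i,j)" and j="\<lambda>(k,l,i,j). (i,j,k,l)"]) auto

definition Br :: "nat set \<Rightarrow> (nat \<Rightarrow> nat \<Rightarrow> real) \<Rightarrow> (nat \<Rightarrow> nat \<Rightarrow> nat \<Rightarrow> real) \<Rightarrow> (nat \<Rightarrow> real) \<Rightarrow> (nat \<Rightarrow> nat \<Rightarrow> real) \<Rightarrow> (nat \<Rightarrow> real) \<Rightarrow> (nat \<Rightarrow> nat \<Rightarrow> real) \<Rightarrow> nat \<Rightarrow> real" where
  "Br S P dP X X2 Y Y2 l = (\<Sum>i\<in>S. \<Sum>j\<in>S. X2 l i * P i j * Y j + X i * dP l i j * Y j + X i * P i j * Y2 l j)"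

lemma T13_cancel:
  assumes P: "\<And>i j. i \<in> S \<Longrightarrow> j \<in> S \<Longrightarrow> P i j = - P j i"
    and Y: "\<And>i j. i \<in> S \<Longrightarrow> j \<in> S \<Longrightarrow> Y2 i j = Y2 j i"
  shows "(\<Sum>k\<in>S. \<Sum>l\<in>S. \<Sum>i\<in>S. \<Sum>j\<in>S. X k * P k l * (Y2 l i * P i j * (Z j::real)))
       + (\<Sum>k\<in>S. \<Sum>l\<in>S. \<Sum>i\<in>S. \<Sum>j\<in>S. Z k * P k l * (X i * P i j * Y2 l j)) = 0"
proof -
  have A: "(\<Sum>k\<in>S. \<Sum>l\<in>S. \<Sum>i\<in>S. \<Sum>j\<in>S. Z k * P k l * (X i * P i j * Y2 l j))
      = (\<Sum>i\<in>S. \<Sum>j\<in>S. \<Sum>l\<in>S. \<Sum>k\<in>S. Z k * P k l * (X i * P i j * Y2 l j))"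
    by (rule sum4_perm_a)
  have pw: "X i * P i j * (Y2 j l * P l k * Z k) = - (Z k * P k l * (X i * P i j * Y2 l j))"
    if "i \<in> S" "j \<in> S" "l \<in> S" "k \<in> S" for i j l k
  proof -
    have "P l k = - P k l" "Y2 j l = Y2 l j" using P[OF that(3,4)] Y[OF that(2,3)] by auto
    then show ?thesis by (simp add: algebra_simps)
  qed
  have B: "(\<Sum>k\<in>S. \<Sum>l\<in>S. \<Sum>i\<in>S. \<Sum>j\<in>S. X k * P k l * (Y2 l i * P i j * Z j))
      = (\<Sum>i\<in>S. \<Sum>j\<in>S. \<Sum>l\<in>S. \<Sum>k\<in>S. - (Z k * P k l * (X i * P i j * Y2 l j)))"
    by (intro sum.cong refl) (simp add: pw)
  have C: "(\<Sum>i\<in>S. \<Sum>j\<in>S. \<Sum>l\<in>S. \<Sum>k\<in>S. - (Z k * P k l * (X i * P i j * Y2 l j)))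
     = - (\<Sum>i\<in>S. \<Sum>j\<in>S. \<Sum>l\<in>S. \<Sum>k\<in>S. Z k * P k l * (X i * P i j * Y2 l j))"
    by (simp only: sum_negf)
  show ?thesis using A B C by linarith
qed

lemma jac_alg:
  assumes P: "\<And>i j. i \<in> S \<Longrightarrow> j \<in> S \<Longrightarrow> P i j = - P j i"
    and F2: "\<And>i j. i \<in> S \<Longrightarrow> j \<in> S \<Longrightarrow> F2 i j = F2 j i"
    and G2: "\<And>i j. i \<in> S \<Longrightarrow> j \<in> S \<Longrightarrow> G2 i j = G2 j i"
    and H2: "\<And>i j. i \<in> S \<Longrightarrow> j \<in> S \<Longrightarrow> H2 i j = H2 j i"
  shows "(\<Sum>k\<in>S. \<Sum>l\<in>S. F k * P k l * Br S P dP G G2 H H2 l)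
       + (\<Sum>k\<in>S. \<Sum>l\<in>S. G k * P k l * Br S P dP H H2 F F2 l)
       + (\<Sum>k\<in>S. \<Sum>l\<in>S. H k * P k l * Br S P dP F F2 G G2 l)
       = (\<Sum>a\<in>S. \<Sum>b\<in>S. \<Sum>c\<in>S. F a * G b * H c *
            (\<Sum>l\<in>S. P a l * dP l b c + P b l * dP l c a + P c l * dP l a b))"
proof -
  define T1 where "T1 X Y2 Z = (\<Sum>k\<in>S. \<Sum>l\<in>S. \<Sum>i\<in>S. \<Sum>j\<in>S. X k * P k l * (Y2 l i * P i j * Z j))" for X Y2 Z
  define T2 where "T2 X Y Z = (\<Sum>k\<in>S. \<Sum>l\<in>S. \<Sum>i\<in>S. \<Sum>j\<in>S. X k * P k l * (Y i * dP l i j * Z j))" for X Y Z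
  define T3 where "T3 X Y Z2 = (\<Sum>k\<in>S. \<Sum>l\<in>S. \<Sum>i\<in>S. \<Sum>j\<in>S. X k * P k l * (Y i * P i j * Z2 l j))" for X Y Z2
  have exp: "(\<Sum>k\<in>S. \<Sum>l\<in>S. X k * P k l * Br S P dP Y Y2 Z Z2 l) = T1 X Y2 Z + T2 X Y Z + T3 X Y Z2" for X Y Y2 Z Z2
  proof -
    have "X k * P k l * Br S P dP Y Y2 Z Z2 l = (\<Sum>i\<in>S. \<Sum>j\<in>S. X k * P k l * (Y2 l i * P i j * Z j))
       + (\<Sum>i\<in>S. \<Sum>j\<in>S. X k * P k l * (Y i * dP l i j * Z j))
       + (\<Sum>i\<in>S. \<Sum>j\<in>S. X k * P k l * (Y i * P i j * Z2 l j))" for k l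
      unfolding Br_def by (simp only: sum.distrib distrib_left sum_distrib_left)
    then show ?thesis unfolding T1_def T2_def T3_def by (simp only: sum.distrib)
  qed
  have c1: "T1 F G2 H + T3 H F G2 = 0" unfolding T1_def T3_def by (rule T13_cancel[OF P G2])
  have c2: "T1 G H2 F + T3 F G H2 = 0" unfolding T1_def T3_def by (rule T13_cancel[OF P H2])
  have c3: "T1 H F2 G + T3 G H F2 = 0" unfolding T1_def T3_def by (rule T13_cancel[OF P F2])
  have r1: "T2 F G H = (\<Sum>a\<in>S. \<Sum>b\<in>S. \<Sum>c\<in>S. \<Sum>l\<in>S. F a * G b * H c * (P a l * dP l b c))"
    unfolding T2_def by (subst sum4_perm_b) (intro sum.cong refl, simp only: ac_simps)
  have r2: "T2 G H F = (\<Sum>a\<in>S. \<Sum>b\<in>S. \<Sum>c\<in>S. \<Sum>l\<in>S. F a * G b * H c * (P b l * dP l c a))"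
    unfolding T2_def by (subst sum4_perm_c) (intro sum.cong refl, simp only: ac_simps)
  have r3: "T2 H F G = (\<Sum>a\<in>S. \<Sum>b\<in>S. \<Sum>c\<in>S. \<Sum>l\<in>S. F a * G b * H c * (P c l * dP l a b))"
    unfolding T2_def by (subst sum4_perm_d) (intro sum.cong refl, simp only: ac_simps)
  have rhs: "(\<Sum>a\<in>S. \<Sum>b\<in>S. \<Sum>c\<in>S. F a * G b * H c *
            (\<Sum>l\<in>S. P a l * dP l b c + P b l * dP l c a + P c l * dP l a b))
     = (\<Sum>a\<in>S. \<Sum>b\<in>S. \<Sum>c\<in>S. \<Sum>l\<in>S. F a * G b * H c * (P a l * dP l b c))
     + (\<Sum>a\<in>S. \<Sum>b\<in>S. \<Sum>c\<in>S. \<Sum>l\<in>S. F a * G b * H c * (P b l * dP l c a))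
     + (\<Sum>a\<in>S. \<Sum>b\<in>S. \<Sum>c\<in>S. \<Sum>l\<in>S. F a * G b * H c * (P c l * dP l a b))"
    by (simp only: sum_distrib_left sum.distrib distrib_left)
  show ?thesis unfolding exp rhs r1[symmetric] r2[symmetric] r3[symmetric]
    using c1 c2 c3 by linarith
qed


lemma e6_simps: "e6 1 = (axis 1 1, 0)" "e6 2 = (axis 2 1, 0)" "e6 3 = (axis 3 1, 0)"
  "e6 4 = (0, axis 1 1)" "e6 5 = (0, axis 2 1)" "e6 6 = (0, axis 3 1)" "e6 (Suc 0) = (axis 1 1, 0)"
  by (simp_all add: e6_def ax3_def)

lemma Basis_vec3: "(Basis :: (real^3) set) = {axis 1 1, axis 2 1, axis 3 1}"
  by (auto simp: Basis_vec_def UNIV_3)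

lemma sum_Basis_vec3: "(\<Sum>b\<in>(Basis::(real^3) set). F b) = F (axis 1 1) + F (axis 2 1) + F (axis 3 1)"
  unfolding Basis_vec3 by (simp add: axis_eq_axis add.assoc)

lemma sum_Basis_prod:
  fixes F :: "('a::euclidean_space \<times> 'b::euclidean_space) \<Rightarrow> real"
  shows "sum F Basis = (\<Sum>u\<in>Basis. F (u, 0)) + (\<Sum>v\<in>Basis. F (0, v))"
proof -
  have "inj_on (\<lambda>u. (u::'a, 0::'b)) Basis" "inj_on (\<lambda>u. (0::'a, u::'b)) Basis"
    by (auto intro!: inj_onI Pair_inject)
  thus ?thesis
    unfolding Basis_prod_def
    by (subst sum.union_disjoint) (auto simp: Basis_prod_def sum.reindex)
qed

lemma sum6: "(\<Sum>k=1..6. G k) = G 1 + G 2 + G 3 + G 4 + G 5 + G 6"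
  for G :: "nat \<Rightarrow> 'a::comm_monoid_add"
  by (simp add: eval_nat_numeral atLeastAtMostSuc_conv add_ac)

lemma sum_Basis6: "(\<Sum>b\<in>(Basis::((real^3) \<times> (real^3)) set). F b) = (\<Sum>k=1..6. F (e6 k))" for F :: "_ \<Rightarrow> real"
  unfolding sum6 by (subst sum_Basis_prod) (simp add: sum_Basis_vec3 e6_simps add_ac)

lemma e6_Basis: "k \<in> {1..6} \<Longrightarrow> e6 k \<in> Basis"
  by (auto simp: e6_def ax3_def Basis_prod_def Basis_vec_def)

lemma in6: "k \<in> {1..6} \<longleftrightarrow> k = 1 \<or> k = 2 \<or> k = 3 \<or> k = 4 \<or> k = 5 \<or> k = (6::nat)"
  by auto

definition DMu :: "((real^3) \<times> (real^3) \<Rightarrow> real^3) \<Rightarrow> (real^3) \<times> (real^3) \<Rightarrow> nat \<Rightarrow> real^3" where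
  "DMu mu p l = (\<chi> m. dirderiv (e6 l) (\<lambda>q. mu q $ m) p)"

definition dPi :: "((real^3) \<times> (real^3) \<Rightarrow> real^3) \<Rightarrow> (real^3) \<times> (real^3) \<Rightarrow> nat \<Rightarrow> nat \<Rightarrow> nat \<Rightarrow> real" where
  "dPi mu p l i j = PiMat (\<lambda>_. 0) (fst (e6 l) + DMu mu p l, snd (e6 l)) i j"

lemma PiMat_shift: "PiMat mu q i j = PiMat (\<lambda>_. 0) (fst q + mu q, snd q) i j"
  by (simp add: PiMat_def Let_def)

lemma PiMat_antisym: "i \<in> {1..6} \<Longrightarrow> j \<in> {1..6} \<Longrightarrow> PiMat mu q i j = - PiMat mu q j i"
  unfolding in6 by (elim disjE) (simp_all add: PiMat_def Let_def)

lemma PiMat0_deriv: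
  assumes "i \<in> {1..6}" "j \<in> {1..6}"
    and A: "\<And>m. ((\<lambda>t. A t $ m) has_real_derivative A' $ m) (at 0)"
    and B: "\<And>m. ((\<lambda>t. B t $ m) has_real_derivative B' $ m) (at 0)"
  shows "((\<lambda>t. PiMat (\<lambda>_. 0) (A t, B t) i j) has_real_derivative PiMat (\<lambda>_. 0) (A', B') i j) (at 0)"
  using assms(1,2) unfolding in6
  by (elim disjE) (simp_all add: PiMat_def Let_def, auto intro!: derivative_eq_intros A B)


lemma PiMat_line_deriv:
  assumes l: "l \<in> {1..6}" and ij: "i \<in> {1..6}" "j \<in> {1..6}"
    and mud: "\<And>m. (\<lambda>t. mu (p + t *\<^sub>R e6 l) $ m) differentiable (at 0)"
  shows "((\<lambda>t. PiMat mu (p + t *\<^sub>R e6 l) i j) has_real_derivative dPi mu p l i j) (at 0)"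
proof -
  have A: "((\<lambda>t. (fst (p + t *\<^sub>R e6 l) + mu (p + t *\<^sub>R e6 l)) $ m) has_real_derivative (fst (e6 l) + DMu mu p l) $ m) (at 0)" for m
  proof -
    have eq: "(\<lambda>t. (fst (p + t *\<^sub>R e6 l) + mu (p + t *\<^sub>R e6 l)) $ m) = (\<lambda>t. fst p $ m + t * fst (e6 l) $ m + mu (p + t *\<^sub>R e6 l) $ m)"
      by (simp add: fun_eq_iff)
    have D: "((\<lambda>t. mu (p + t *\<^sub>R e6 l) $ m) has_real_derivative DMu mu p l $ m) (at 0)"
      unfolding DMu_def using dirderiv_DERIV[OF mud[of m]] by simp
    show ?thesis unfolding eq by (auto intro!: derivative_eq_intros D)
  qed
  have B: "((\<lambda>t. snd (p + t *\<^sub>R e6 l) $ m) has_real_derivative snd (e6 l) $ m) (at 0)" for m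
  proof -
    have eq: "(\<lambda>t. snd (p + t *\<^sub>R e6 l) $ m) = (\<lambda>t. snd p $ m + t * snd (e6 l) $ m)"
      by (simp add: fun_eq_iff)
    show ?thesis unfolding eq by (auto intro!: derivative_eq_intros)
  qed
  show ?thesis unfolding PiMat_shift[of mu] dPi_def
    by (rule PiMat0_deriv[OF ij A B])
qed

lemma pbracket_deriv:
  assumes G: "\<And>i. i \<in> {1..6} \<Longrightarrow> ((\<lambda>t. grad6 g (p + t *\<^sub>R e) i) has_real_derivative G' i) (at 0)"
    and H: "\<And>i. i \<in> {1..6} \<Longrightarrow> ((\<lambda>t. grad6 h (p + t *\<^sub>R e) i) has_real_derivative H' i) (at 0)"
    and P: "\<And>i j. i \<in> {1..6} \<Longrightarrow> j \<in> {1..6} \<Longrightarrow> ((\<lambda>t. PiMat mu (p + t *\<^sub>R e) i j) has_real_derivative P' i j) (at 0)"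
  shows "dirderiv e (pbracket mu g h) p = (\<Sum>i=1..6. \<Sum>j=1..6. G' i * PiMat mu p i j * grad6 h p j
      + grad6 g p i * P' i j * grad6 h p j + grad6 g p i * PiMat mu p i j * H' j)"
proof -
  have trm: "((\<lambda>t. grad6 g (p + t *\<^sub>R e) i * PiMat mu (p + t *\<^sub>R e) i j * grad6 h (p + t *\<^sub>R e) j)
     has_real_derivative G' i * PiMat mu p i j * grad6 h p j
      + grad6 g p i * P' i j * grad6 h p j + grad6 g p i * PiMat mu p i j * H' j) (at 0)"
    if "i \<in> {1..6}" "j \<in> {1..6}" for i j
    using DERIV_mult[OF DERIV_mult[OF G[OF that(1)] P[OF that]] H[OF that(2)]] by (simp add: algebra_simps)
  have "((\<lambda>t. pbracket mu g h (p + t *\<^sub>R e)) has_real_derivative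
     (\<Sum>i=1..6. \<Sum>j=1..6. G' i * PiMat mu p i j * grad6 h p j
      + grad6 g p i * P' i j * grad6 h p j + grad6 g p i * PiMat mu p i j * H' j)) (at 0)"
    unfolding pbracket_def by (intro DERIV_sum trm)
  then show ?thesis unfolding dirderiv_def by (rule DERIV_imp_deriv)
qed


definition F2 :: "((real^3) \<times> (real^3) \<Rightarrow> real) \<Rightarrow> (real^3) \<times> (real^3) \<Rightarrow> nat \<Rightarrow> nat \<Rightarrow> real" where
  "F2 f p l i = dirderiv (e6 l) (\<lambda>q. grad6 f q i) p"

definition Jc :: "((real^3) \<times> (real^3) \<Rightarrow> real^3) \<Rightarrow> (real^3) \<times> (real^3) \<Rightarrow> nat \<Rightarrow> nat \<Rightarrow> nat \<Rightarrow> real" where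
  "Jc mu p a b c = (\<Sum>l=1..6. PiMat mu p a l * dPi mu p l b c + PiMat mu p b l * dPi mu p l c a + PiMat mu p c l * dPi mu p l a b)"

lemma grad6_eq: "(\<lambda>q. grad6 f q i) = dirderiv (e6 i) f"
  by (simp add: fun_eq_iff grad6_def)

lemma grad_line:
  assumes "smooth_on U f" "p \<in> U" "l \<in> {1..6}" "i \<in> {1..6}"
  shows "((\<lambda>t. grad6 f (p + t *\<^sub>R e6 l) i) has_real_derivative F2 f p l i) (at 0)"
proof -
  have s: "smooth_on U (dirderiv (e6 i) f)" using smooth_onD_deriv[OF assms(1) e6_Basis[OF assms(4)]] .
  have "(\<lambda>t. dirderiv (e6 i) f (p + t *\<^sub>R e6 l)) differentiable (at 0)"
    using smooth_onD_diff[OF s e6_Basis[OF assms(3)] assms(2)] .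
  from dirderiv_DERIV[OF this] show ?thesis unfolding F2_def grad6_eq by (simp add: grad6_def)
qed

lemma F2_sym:
  assumes "open U" "smooth_on U f" "p \<in> U" "l \<in> {1..6}" "i \<in> {1..6}"
  shows "F2 f p l i = F2 f p i l"
proof -
  have a: "e6 i \<in> Basis" and b: "e6 l \<in> Basis" using assms(4,5) by (auto intro: e6_Basis)
  have sa: "smooth_on U (dirderiv (e6 i) f)" and sb: "smooth_on U (dirderiv (e6 l) f)"
    using smooth_onD_deriv[OF assms(2)] a b by auto
  have "dirderiv (e6 l) (dirderiv (e6 i) f) p = dirderiv (e6 i) (dirderiv (e6 l) f) p"
  proof (rule schwarz[OF assms(1,3) a b])
    show "\<And>y. y \<in> U \<Longrightarrow> (\<lambda>t. f (y + t *\<^sub>R e6 i)) differentiable at 0"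
      using smooth_onD_diff[OF assms(2) a] .
    show "\<And>y. y \<in> U \<Longrightarrow> (\<lambda>t. f (y + t *\<^sub>R e6 l)) differentiable at 0"
      using smooth_onD_diff[OF assms(2) b] .
    show "\<And>y. y \<in> U \<Longrightarrow> (\<lambda>t. dirderiv (e6 i) f (y + t *\<^sub>R e6 l)) differentiable at 0"
      using smooth_onD_diff[OF sa b] .
    show "\<And>y. y \<in> U \<Longrightarrow> (\<lambda>t. dirderiv (e6 l) f (y + t *\<^sub>R e6 i)) differentiable at 0"
      using smooth_onD_diff[OF sb a] .
    show "continuous_on U (dirderiv (e6 l) (dirderiv (e6 i) f))"
      using smooth_onD_cont[OF smooth_onD_deriv[OF sa b]] .
    show "continuous_on U (dirderiv (e6 i) (dirderiv (e6 l) f))"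
      using smooth_onD_cont[OF smooth_onD_deriv[OF sb a]] .
  qed
  then show ?thesis unfolding F2_def grad6_eq .
qed

lemma bracket_grad:
  assumes "smooth_vec_on U mu" "smooth_on U g" "smooth_on U h" "p \<in> U" "l \<in> {1..6}"
  shows "grad6 (pbracket mu g h) p l = Br {1..6} (PiMat mu p) (dPi mu p) (grad6 g p) (F2 g p) (grad6 h p) (F2 h p) l"
proof -
  have mud: "(\<lambda>t. mu (p + t *\<^sub>R e6 l) $ m) differentiable (at 0)" for m
    using smooth_onD_diff[of U "\<lambda>q. mu q $ m", OF _ e6_Basis[OF assms(5)] assms(4)] assms(1)
    unfolding smooth_vec_on_def by auto
  show ?thesis unfolding grad6_def[of "pbracket mu g h"] Br_def
    by (rule pbracket_deriv[where e="e6 l"], rule grad_line[OF assms(2,4,5)], assumption,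
        rule grad_line[OF assms(3,4,5)], assumption, rule PiMat_line_deriv[OF assms(5) _ _ mud])
qed

theorem jacobiator_expand:
  assumes U: "open U" "p \<in> U" and mu: "smooth_vec_on U mu"
    and f: "smooth_on U f" and g: "smooth_on U g" and h: "smooth_on U h"
  shows "pbracket mu f (pbracket mu g h) p + pbracket mu g (pbracket mu h f) p + pbracket mu h (pbracket mu f g) p
    = (\<Sum>a=1..6. \<Sum>b=1..6. \<Sum>c=1..6. grad6 f p a * grad6 g p b * grad6 h p c * Jc mu p a b c)"
proof -
  have e: "pbracket mu X (pbracket mu Y Z) p = (\<Sum>k=1..6. \<Sum>l=1..6. grad6 X p k * PiMat mu p k l *
      Br {1..6} (PiMat mu p) (dPi mu p) (grad6 Y p) (F2 Y p) (grad6 Z p) (F2 Z p) l)"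
    if "smooth_on U Y" "smooth_on U Z" for X Y Z
    unfolding pbracket_def[of mu X] using bracket_grad[OF mu that U(2)] by simp
  show ?thesis
    unfolding e[OF g h] e[OF h f] e[OF f g] Jc_def
    by (rule jac_alg) (auto intro: PiMat_antisym F2_sym[OF U(1) f U(2)] F2_sym[OF U(1) g U(2)] F2_sym[OF U(1) h U(2)])
qed


lemma axis_comps: "(axis 1 1 :: real^3) $ 1 = 1" "(axis 1 1 :: real^3) $ 2 = 0" "(axis 1 1 :: real^3) $ 3 = 0"
  "(axis 2 1 :: real^3) $ 1 = 0" "(axis 2 1 :: real^3) $ 2 = 1" "(axis 2 1 :: real^3) $ 3 = 0"
  "(axis 3 1 :: real^3) $ 1 = 0" "(axis 3 1 :: real^3) $ 2 = 0" "(axis 3 1 :: real^3) $ 3 = 1"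
  by (simp_all add: axis_def)

definition Cexpr :: "real^3 \<Rightarrow> real^3 \<Rightarrow> real^3 \<Rightarrow> real^3 \<Rightarrow> real^3 \<Rightarrow> real^3 \<Rightarrow> real" where
  "Cexpr g m Ns N1 N2 N3 = g$1 * (N2$3 - N3$2) + g$2 * (N3$1 - N1$3) + g$3 * (N1$2 - N2$1)
     + m$1 * (g$2 * Ns$3 - g$3 * Ns$2) + m$2 * (g$3 * Ns$1 - g$1 * Ns$3) + m$3 * (g$1 * Ns$2 - g$2 * Ns$1)"

lemma Jc_form:
  assumes D1: "DMu mu p 1 = snd p $ 1 *\<^sub>R Ns" and D2: "DMu mu p 2 = snd p $ 2 *\<^sub>R Ns"
    and D3: "DMu mu p 3 = snd p $ 3 *\<^sub>R Ns" and D4: "DMu mu p 4 = N1 + fst p $ 1 *\<^sub>R Ns"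
    and D5: "DMu mu p 5 = N2 + fst p $ 2 *\<^sub>R Ns" and D6: "DMu mu p 6 = N3 + fst p $ 3 *\<^sub>R Ns"
    and abc: "a \<in> {1..6}" "b \<in> {1..6}" "c \<in> {1..6}"
  shows "Jc mu p a b c = (if (a,b,c) \<in> {(1,2,3),(2,3,1),(3,1,2)} then - Cexpr (snd p) (mu p) Ns N1 N2 N3
     else if (a,b,c) \<in> {(1,3,2),(3,2,1),(2,1,3)} then Cexpr (snd p) (mu p) Ns N1 N2 N3 else 0)"
proof -
  have D1': "DMu mu p (Suc 0) = snd p $ 1 *\<^sub>R Ns" using D1 by simp
  show ?thesis
  using abc unfolding in6 Jc_def sum6 dPi_def Cexpr_def
  by (elim disjE) (simp_all add: PiMat_def Let_def e6_simps axis_comps D1 D1' D2 D3 D4 D5 D6 algebra_simps)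
qed


lemma line_ev:
  fixes x :: "'a::real_normed_vector"
  assumes "open V" "x \<in> V"
  shows "eventually (\<lambda>t. x + t *\<^sub>R b \<in> V) (nhds (0::real))"
proof -
  have "continuous_on UNIV (\<lambda>t::real. x + t *\<^sub>R b)" by (intro continuous_intros)
  then have "open ((\<lambda>t::real. x + t *\<^sub>R b) -` V)" using assms(1) open_vimage by blast
  then have "\<forall>\<^sub>F t in nhds 0. t \<in> (\<lambda>t. x + t *\<^sub>R b) -` V"
    using assms(2) by (intro eventually_nhds_in_open) auto
  then show ?thesis by simp
qed

lemma DERIV_line_cong:
  fixes x :: "'a::real_normed_vector"
  assumes "open V" "x \<in> V" "\<And>y. y \<in> V \<Longrightarrow> h y = h' y"
    and "((\<lambda>t. h (x + t *\<^sub>R b)) has_real_derivative D) (at 0)"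
  shows "((\<lambda>t. h' (x + t *\<^sub>R b)) has_real_derivative D) (at 0)"
proof -
  have "eventually (\<lambda>t. h (x + t *\<^sub>R b) = h' (x + t *\<^sub>R b)) (nhds (0::real))"
    using line_ev[OF assms(1,2), of b] by eventually_elim (use assms(3) in auto)
  then show ?thesis using assms(4) DERIV_cong_ev[of 0 0 "\<lambda>t. h (x + t *\<^sub>R b)" "\<lambda>t. h' (x + t *\<^sub>R b)" D D] by simp
qed

lemma line_diff_iff: "(f differentiable (at (0::real))) \<longleftrightarrow> (\<exists>D. (f has_real_derivative D) (at 0))"
  by (simp add: real_differentiable_def)

lemma smooth_on_const: "smooth_on (V::'a::euclidean_space set) (\<lambda>x. c)"
proof (rule smooth_on_coind[where C="range (\<lambda>c. \<lambda>x. c)"])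
  show "(\<lambda>x. c) \<in> range (\<lambda>c x. c)" by auto
next
  fix h :: "'a \<Rightarrow> real" assume "h \<in> range (\<lambda>c x. c)" then show "continuous_on V h" by auto
next
  fix h :: "'a \<Rightarrow> real" and b x assume "h \<in> range (\<lambda>c x. c)" then show "(\<lambda>t. h (x + t *\<^sub>R b)) differentiable at 0" by auto
next
  fix h :: "'a \<Rightarrow> real" and b assume "h \<in> range (\<lambda>c x. c)"
  then obtain c where h: "h = (\<lambda>x. c)" by auto
  have "dirderiv b h = (\<lambda>x. 0)" unfolding h dirderiv_def by (simp add: fun_eq_iff)
  then show "dirderiv b h \<in> range (\<lambda>c x. c)" by auto
qed

lemma smooth_on_inner: "smooth_on (V::'a::euclidean_space set) (\<lambda>x. x \<bullet> v)"
proof (rule smooth_on_coind[where C="range (\<lambda>v. \<lambda>x. x \<bullet> v) \<union> range (\<lambda>c. \<lambda>x. c)"])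
  show "(\<lambda>x. x \<bullet> v) \<in> range (\<lambda>v x. x \<bullet> v) \<union> range (\<lambda>c x. c)" by auto
next
  fix h :: "'a \<Rightarrow> real" assume "h \<in> range (\<lambda>v x. x \<bullet> v) \<union> range (\<lambda>c x. c)" then show "continuous_on V h"
    by (auto intro!: continuous_intros)
next
  fix h :: "'a \<Rightarrow> real" and b x assume "h \<in> range (\<lambda>v x. x \<bullet> v) \<union> range (\<lambda>c x. c)"
  then show "(\<lambda>t. h (x + t *\<^sub>R b)) differentiable at 0"
    by (auto simp: inner_add_left intro!: derivative_intros)
next
  fix h :: "'a \<Rightarrow> real" and b assume "h \<in> range (\<lambda>v x. x \<bullet> v) \<union> range (\<lambda>c x. c)"
  then consider v where "h = (\<lambda>x. x \<bullet> v)" | c where "h = (\<lambda>x. c)" by auto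
  then show "dirderiv b h \<in> range (\<lambda>v x. x \<bullet> v) \<union> range (\<lambda>c x. c)"
  proof cases
    case (1 v)
    have "dirderiv b h x = b \<bullet> v" for x
    proof -
      have "((\<lambda>t. h (x + t *\<^sub>R b)) has_real_derivative b \<bullet> v) (at 0)"
        unfolding 1 by (auto simp: inner_add_left intro!: derivative_eq_intros)
      then show ?thesis unfolding dirderiv_def by (rule DERIV_imp_deriv)
    qed
    then have "dirderiv b h = (\<lambda>x. b \<bullet> v)" by auto
    then show ?thesis by auto
  next
    case (2 c)
    have "dirderiv b h = (\<lambda>x. 0)" unfolding 2 dirderiv_def by (simp add: fun_eq_iff)
    then show ?thesis by auto
  qed
qed

inductive_set SC :: "'a::euclidean_space set \<Rightarrow> ('a \<Rightarrow> 'b::euclidean_space) \<Rightarrow> 'b set \<Rightarrow> ('a \<Rightarrow> real) set"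
  for V \<phi> W where
  base: "smooth_on V h \<Longrightarrow> h \<in> SC V \<phi> W"
| comp: "smooth_on W k \<Longrightarrow> (\<lambda>x. k (\<phi> x)) \<in> SC V \<phi> W"
| add: "h1 \<in> SC V \<phi> W \<Longrightarrow> h2 \<in> SC V \<phi> W \<Longrightarrow> (\<lambda>x. h1 x + h2 x) \<in> SC V \<phi> W"
| mult: "h1 \<in> SC V \<phi> W \<Longrightarrow> h2 \<in> SC V \<phi> W \<Longrightarrow> (\<lambda>x. h1 x * h2 x) \<in> SC V \<phi> W"
| inv: "h \<in> SC V \<phi> W \<Longrightarrow> (\<forall>x\<in>V. h x \<noteq> 0) \<Longrightarrow> (\<lambda>x. inverse (h x)) \<in> SC V \<phi> W"
| cong: "h \<in> SC V \<phi> W \<Longrightarrow> (\<forall>x\<in>V. h x = h' x) \<Longrightarrow> h' \<in> SC V \<phi> W"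

lemma SC_sum: "finite B \<Longrightarrow> (\<And>b. b \<in> B \<Longrightarrow> H b \<in> SC V \<phi> W) \<Longrightarrow> (\<lambda>x. \<Sum>b\<in>B. H b x) \<in> SC V \<phi> W"
proof (induction B rule: finite_induct)
  case empty
  then show ?case using SC.base[OF smooth_on_const[of V 0]] by simp
next
  case (insert c B)
  then show ?case using SC.add[of "H c" V \<phi> W "\<lambda>x. \<Sum>b\<in>B. H b x"] by simp
qed


lemma vec_line_deriv:
  fixes \<phi> :: "'a::euclidean_space \<Rightarrow> 'b::euclidean_space"
  assumes "\<And>b'. b' \<in> Basis \<Longrightarrow> (\<lambda>t. \<phi> (x + t *\<^sub>R b) \<bullet> b') differentiable (at 0)"
  shows "((\<lambda>t. \<phi> (x + t *\<^sub>R b)) has_vector_derivative (\<Sum>b'\<in>Basis. dirderiv b (\<lambda>y. \<phi> y \<bullet> b') x *\<^sub>R b')) (at 0)"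
proof -
  have "((\<lambda>t. \<phi> (x + t *\<^sub>R b) \<bullet> b') has_derivative (\<lambda>h. (h *\<^sub>R (\<Sum>b'\<in>Basis. dirderiv b (\<lambda>y. \<phi> y \<bullet> b') x *\<^sub>R b')) \<bullet> b')) (at 0)"
    if b': "b' \<in> Basis" for b'
  proof -
    have "((\<lambda>t. \<phi> (x + t *\<^sub>R b) \<bullet> b') has_real_derivative dirderiv b (\<lambda>y. \<phi> y \<bullet> b') x) (at 0)"
      using dirderiv_DERIV[of "\<lambda>y. \<phi> y \<bullet> b'", OF assms[OF b']] by simp
    moreover have "(\<lambda>h. (h *\<^sub>R (\<Sum>b'\<in>Basis. dirderiv b (\<lambda>y. \<phi> y \<bullet> b') x *\<^sub>R b')) \<bullet> b') = (*) (dirderiv b (\<lambda>y. \<phi> y \<bullet> b') x)"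
      using b' by (auto simp: fun_eq_iff)
    ultimately show ?thesis unfolding has_field_derivative_def by simp
  qed
  then show ?thesis unfolding has_vector_derivative_def
    by (subst has_derivative_componentwise_within) auto
qed

lemma SC_inv:
  fixes V :: "'a::euclidean_space set" and W :: "'b::euclidean_space set"
  assumes V: "open V" and W: "open W" and \<phi>W: "\<And>x. x \<in> V \<Longrightarrow> \<phi> x \<in> W"
    and \<phi>s: "\<And>b'. b' \<in> Basis \<Longrightarrow> smooth_on V (\<lambda>x. \<phi> x \<bullet> b')"
  shows "h \<in> SC V \<phi> W \<Longrightarrow> continuous_on V h \<and> (\<forall>b\<in>Basis. \<forall>x\<in>V. (\<lambda>t. h (x + t *\<^sub>R b)) differentiable (at 0))
     \<and> (\<forall>b\<in>Basis. dirderiv b h \<in> SC V \<phi> W)"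
proof (induction h rule: SC.induct)
  case (base h)
  then show ?case using smooth_onD_cont smooth_onD_diff smooth_onD_deriv SC.base by blast
next
  case (comp k)
  have \<phi>cont: "continuous_on V \<phi>"
  proof -
    have "continuous_on V (\<lambda>x. \<Sum>b'\<in>Basis. (\<phi> x \<bullet> b') *\<^sub>R b')"
      using \<phi>s smooth_onD_cont by (intro continuous_on_sum continuous_on_scaleR continuous_on_const) blast+
    then show ?thesis by (simp add: euclidean_representation)
  qed
  have kd: "\<And>b y. b \<in> Basis \<Longrightarrow> y \<in> W \<Longrightarrow> (\<lambda>t. k (y + t *\<^sub>R b)) differentiable (at 0)"
    using smooth_onD_diff[OF comp] by blast
  have kc: "\<And>b. b \<in> Basis \<Longrightarrow> continuous_on W (dirderiv b k)"
    using smooth_onD_cont[OF smooth_onD_deriv[OF comp]] by blast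
  have D: "((\<lambda>t. k (\<phi> (x + t *\<^sub>R b))) has_real_derivative
      (\<Sum>b'\<in>Basis. dirderiv b (\<lambda>y. \<phi> y \<bullet> b') x * dirderiv b' k (\<phi> x))) (at 0)"
    if b: "b \<in> Basis" and x: "x \<in> V" for b x
  proof -
    have cd: "((\<lambda>t. \<phi> (x + t *\<^sub>R b)) has_vector_derivative (\<Sum>b'\<in>Basis. dirderiv b (\<lambda>y. \<phi> y \<bullet> b') x *\<^sub>R b')) (at 0)"
    proof (rule vec_line_deriv)
      fix b' :: 'b assume b': "b' \<in> Basis"
      show "(\<lambda>t. \<phi> (x + t *\<^sub>R b) \<bullet> b') differentiable at 0"
        using smooth_onD_diff[OF \<phi>s[OF b'] b x] by simp
    qed
    have "((\<lambda>t. k (\<phi> (x + t *\<^sub>R b))) has_real_derivative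
      (\<Sum>b'\<in>Basis. ((\<Sum>b'\<in>Basis. dirderiv b (\<lambda>y. \<phi> y \<bullet> b') x *\<^sub>R b') \<bullet> b') * dirderiv b' k (\<phi> (x + 0 *\<^sub>R b)))) (at 0)"
      by (rule C1_chain[OF W _ kd kc cd]) (use \<phi>W x in auto)
    then show ?thesis by simp
  qed
  show ?case
  proof (intro conjI ballI)
    show "continuous_on V (\<lambda>x. k (\<phi> x))"
      by (rule continuous_on_compose2[OF smooth_onD_cont[OF comp] \<phi>cont]) (use \<phi>W in auto)
  next
    fix b :: 'a and x assume "b \<in> Basis" "x \<in> V"
    then show "(\<lambda>t. k (\<phi> (x + t *\<^sub>R b))) differentiable at 0"
      using D real_differentiable_def by blast
  next
    fix b :: 'a assume b: "b \<in> Basis"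
    have mem: "(\<lambda>x. \<Sum>b'\<in>Basis. dirderiv b (\<lambda>y. \<phi> y \<bullet> b') x * dirderiv b' k (\<phi> x)) \<in> SC V \<phi> W"
      by (intro SC_sum finite_Basis SC.mult SC.base SC.comp smooth_onD_deriv[OF \<phi>s b] smooth_onD_deriv[OF comp])
    show "dirderiv b (\<lambda>x. k (\<phi> x)) \<in> SC V \<phi> W"
    proof (rule SC.cong[OF mem], intro ballI)
      fix x assume "x \<in> V"
      show "(\<Sum>b'\<in>Basis. dirderiv b (\<lambda>y. \<phi> y \<bullet> b') x * dirderiv b' k (\<phi> x)) = dirderiv b (\<lambda>x. k (\<phi> x)) x"
        unfolding dirderiv_def[of b "\<lambda>x. k (\<phi> x)"] using D[OF b \<open>x \<in> V\<close>] by (simp add: DERIV_imp_deriv)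
    qed
  qed
next
  case (add h1 h2)
  show ?case
  proof (intro conjI ballI)
    show "continuous_on V (\<lambda>x. h1 x + h2 x)" using add.IH by (intro continuous_intros) auto
  next
    fix b :: 'a and x assume bx: "b \<in> Basis" "x \<in> V"
    then show "(\<lambda>t. h1 (x + t *\<^sub>R b) + h2 (x + t *\<^sub>R b)) differentiable at 0"
      using add.IH by (intro differentiable_add) auto
  next
    fix b :: 'a assume b: "b \<in> Basis"
    show "dirderiv b (\<lambda>x. h1 x + h2 x) \<in> SC V \<phi> W"
    proof -
    have m: "(\<lambda>x. dirderiv b h1 x + dirderiv b h2 x) \<in> SC V \<phi> W" using add.IH b by (intro SC.add) auto
    show ?thesis
    proof (rule SC.cong[OF m], intro ballI)
      fix x assume x: "x \<in> V"
      have "((\<lambda>t. h1 (x + t *\<^sub>R b) + h2 (x + t *\<^sub>R b)) has_real_derivative dirderiv b h1 x + dirderiv b h2 x) (at 0)"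
        using add.IH b x by (intro DERIV_add dirderiv_DERIV) auto
      then show "dirderiv b h1 x + dirderiv b h2 x = dirderiv b (\<lambda>x. h1 x + h2 x) x"
        unfolding dirderiv_def[of b "\<lambda>x. h1 x + h2 x"] by (simp add: DERIV_imp_deriv)
    qed
    qed
  qed
next
  case (mult h1 h2)
  show ?case
  proof (intro conjI ballI)
    show "continuous_on V (\<lambda>x. h1 x * h2 x)" using mult.IH by (intro continuous_intros) auto
  next
    fix b :: 'a and x assume bx: "b \<in> Basis" "x \<in> V"
    then show "(\<lambda>t. h1 (x + t *\<^sub>R b) * h2 (x + t *\<^sub>R b)) differentiable at 0"
      using mult.IH by (intro differentiable_mult) auto
  next
    fix b :: 'a assume b: "b \<in> Basis"
    show "dirderiv b (\<lambda>x. h1 x * h2 x) \<in> SC V \<phi> W"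
    proof -
    have m: "(\<lambda>x. dirderiv b h1 x * h2 x + h1 x * dirderiv b h2 x) \<in> SC V \<phi> W"
      using mult.IH mult.hyps b by (intro SC.add SC.mult) auto
    show ?thesis
    proof (rule SC.cong[OF m], intro ballI)
      fix x assume x: "x \<in> V"
      have d1: "((\<lambda>t. h1 (x + t *\<^sub>R b)) has_real_derivative dirderiv b h1 x) (at 0)"
        using mult.IH b x by (intro dirderiv_DERIV) auto
      have d2: "((\<lambda>t. h2 (x + t *\<^sub>R b)) has_real_derivative dirderiv b h2 x) (at 0)"
        using mult.IH b x by (intro dirderiv_DERIV) auto
      have "((\<lambda>t. h1 (x + t *\<^sub>R b) * h2 (x + t *\<^sub>R b)) has_real_derivative
          dirderiv b h1 x * h2 x + h1 x * dirderiv b h2 x) (at 0)"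
        using DERIV_mult[OF d1 d2] by (simp add: mult.commute)
      then show "dirderiv b h1 x * h2 x + h1 x * dirderiv b h2 x = dirderiv b (\<lambda>x. h1 x * h2 x) x"
        unfolding dirderiv_def[of b "\<lambda>x. h1 x * h2 x"] by (simp add: DERIV_imp_deriv)
    qed
    qed
  qed
next
  case (inv h)
  show ?case
  proof (intro conjI ballI)
    show "continuous_on V (\<lambda>x. inverse (h x))" using inv.IH inv.hyps by (intro continuous_intros) auto
  next
    fix b :: 'a and x assume bx: "b \<in> Basis" "x \<in> V"
    have d: "((\<lambda>t. h (x + t *\<^sub>R b)) has_real_derivative dirderiv b h x) (at 0)"
      using inv.IH bx by (intro dirderiv_DERIV) auto
    have "((\<lambda>t. inverse (h (x + t *\<^sub>R b))) has_real_derivative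
       - (dirderiv b h x * inverse (h x ^ Suc (Suc 0)))) (at 0)"
      using DERIV_inverse_fun[OF d] inv.hyps bx by simp
    then show "(\<lambda>t. inverse (h (x + t *\<^sub>R b))) differentiable at 0"
      using real_differentiable_def by blast
  next
    fix b :: 'a assume b: "b \<in> Basis"
    have mem: "(\<lambda>x. (-1) * (dirderiv b h x * (inverse (h x) * inverse (h x)))) \<in> SC V \<phi> W"
      using inv.IH b by (intro SC.mult SC.inv SC.base[OF smooth_on_const] inv.hyps) auto
    show "dirderiv b (\<lambda>x. inverse (h x)) \<in> SC V \<phi> W"
    proof (rule SC.cong[OF mem], intro ballI)
      fix x assume x: "x \<in> V"
      have d: "((\<lambda>t. h (x + t *\<^sub>R b)) has_real_derivative dirderiv b h x) (at 0)"
        using inv.IH b x by (intro dirderiv_DERIV) auto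
      have "((\<lambda>t. inverse (h (x + t *\<^sub>R b))) has_real_derivative
         - (dirderiv b h x * inverse (h x ^ Suc (Suc 0)))) (at 0)"
        using DERIV_inverse_fun[OF d] inv.hyps x by simp
      then show "(-1) * (dirderiv b h x * (inverse (h x) * inverse (h x))) = dirderiv b (\<lambda>x. inverse (h x)) x"
        unfolding dirderiv_def[of b "\<lambda>x. inverse (h x)"] by (simp add: DERIV_imp_deriv power2_eq_square inverse_mult_distrib)
    qed
  qed
next
  case (cong h h')
  show ?case
  proof (intro conjI ballI)
    show "continuous_on V h'" using cong.IH cong.hyps continuous_on_cong by blast
  next
    fix b :: 'a and x assume bx: "b \<in> Basis" "x \<in> V"
    have "((\<lambda>t. h' (x + t *\<^sub>R b)) has_real_derivative dirderiv b h x) (at 0)"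
      by (rule DERIV_line_cong[OF V bx(2), of h]) (use cong.IH cong.hyps bx in \<open>auto intro: dirderiv_DERIV\<close>)
    then show "(\<lambda>t. h' (x + t *\<^sub>R b)) differentiable at 0" using real_differentiable_def by blast
  next
    fix b :: 'a assume b: "b \<in> Basis"
    show "dirderiv b h' \<in> SC V \<phi> W"
      by (rule SC.cong[of "dirderiv b h"]) (use cong.IH cong.hyps b in \<open>auto intro: dirderiv_cong[OF V]\<close>)
  qed
qed

theorem SC_smooth:
  fixes V :: "'a::euclidean_space set" and W :: "'b::euclidean_space set"
  assumes V: "open V" and W: "open W" and \<phi>W: "\<And>x. x \<in> V \<Longrightarrow> \<phi> x \<in> W"
    and \<phi>s: "\<And>b'. b' \<in> Basis \<Longrightarrow> smooth_on V (\<lambda>x. \<phi> x \<bullet> b')"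
    and h: "h \<in> SC V \<phi> W"
  shows "smooth_on V h"
  by (rule smooth_on_coind[where C="SC V \<phi> W", OF h]) (use SC_inv[OF assms(1-4)] in blast)+


lemma Omega_eq: "{p. snd p \<in> D} = UNIV \<times> D" by auto
lemma V_eq: "{q. fst q \<in> D} = D \<times> UNIV" by auto
lemma open_Omega: "open D \<Longrightarrow> open {p::('a::topological_space \<times> 'b::topological_space). snd p \<in> D}"
  unfolding Omega_eq by (intro open_Times) auto
lemma open_V: "open D \<Longrightarrow> open {p::('a::topological_space \<times> 'b::topological_space). fst p \<in> D}"
  unfolding V_eq by (intro open_Times) auto

lemma sum_Basis_V: "(\<Sum>b\<in>(Basis::((real^3) \<times> real) set). F b) = F (axis 1 1, 0) + F (axis 2 1, 0) + F (axis 3 1, 0) + F (0, 1)"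
  for F :: "_ \<Rightarrow> real"
  by (subst sum_Basis_prod) (simp add: sum_Basis_vec3)

lemma e6_fs_inner: "l \<in> {1..6} \<Longrightarrow> fst (e6 l) \<bullet> snd (e6 l) = 0"
  unfolding in6 by (elim disjE) (simp_all add: e6_simps)

lemma DMu_nu_gen:
  fixes nu :: "(real^3) \<times> real \<Rightarrow> real^3"
  assumes D: "open D" and nus: "smooth_vec_on {q. fst q \<in> D} nu"
    and rel: "\<And>M g. g \<in> D \<Longrightarrow> mu (M, g) = nu (g, M \<bullet> g)"
    and p: "snd p \<in> D" and l: "l \<in> {1..6}"
  shows "DMu mu p l $ i = (\<Sum>b\<in>Basis. ((snd (e6 l), fst (e6 l) \<bullet> snd p + fst p \<bullet> snd (e6 l)) \<bullet> b)
            * dirderiv b (\<lambda>q. nu q $ i) (snd p, fst p \<bullet> snd p))"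
proof -
  let ?V = "{q::(real^3) \<times> real. fst q \<in> D}"
  let ?w = "(snd (e6 l), fst (e6 l) \<bullet> snd p + fst p \<bullet> snd (e6 l))"
  have si: "smooth_on ?V (\<lambda>q. nu q $ i)" using nus unfolding smooth_vec_on_def by auto
  have C: "((\<lambda>t. nu ((snd p, fst p \<bullet> snd p) + t *\<^sub>R ?w) $ i) has_real_derivative
      (\<Sum>b\<in>Basis. (?w \<bullet> b) * dirderiv b (\<lambda>q. nu q $ i) (snd p, fst p \<bullet> snd p))) (at 0)"
    using C1_dir[of ?V "(snd p, fst p \<bullet> snd p)" "\<lambda>q. nu q $ i" ?w] open_V[OF D] p
      smooth_onD_diff[OF si] smooth_onD_cont[OF smooth_onD_deriv[OF si]] by auto
  have eq1: "DMu mu p l $ i = dirderiv (e6 l) (\<lambda>q. nu (snd q, fst q \<bullet> snd q) $ i) p"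
    unfolding DMu_def by (simp, rule dirderiv_cong[OF open_Omega[OF D]]) (use p rel in \<open>auto simp: prod_eq_iff\<close>)
  have fe: "(\<lambda>t. nu (snd (p + t *\<^sub>R e6 l), fst (p + t *\<^sub>R e6 l) \<bullet> snd (p + t *\<^sub>R e6 l)) $ i)
      = (\<lambda>t. nu ((snd p, fst p \<bullet> snd p) + t *\<^sub>R ?w) $ i)"
  proof
    fix t
    have "fst (p + t *\<^sub>R e6 l) \<bullet> snd (p + t *\<^sub>R e6 l) = fst p \<bullet> snd p + t * (fst (e6 l) \<bullet> snd p + fst p \<bullet> snd (e6 l))"
      using e6_fs_inner[OF l] by (simp add: inner_add_left inner_add_right algebra_simps)
    then show "nu (snd (p + t *\<^sub>R e6 l), fst (p + t *\<^sub>R e6 l) \<bullet> snd (p + t *\<^sub>R e6 l)) $ i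
      = nu ((snd p, fst p \<bullet> snd p) + t *\<^sub>R ?w) $ i" by simp
  qed
  show ?thesis unfolding eq1 dirderiv_def[of "e6 l"] fe by (rule DERIV_imp_deriv[OF C])
qed

lemma DMu_nu:
  fixes nu :: "(real^3) \<times> real \<Rightarrow> real^3"
  assumes D: "open D" and nus: "smooth_vec_on {q. fst q \<in> D} nu"
    and rel: "\<And>M g. g \<in> D \<Longrightarrow> mu (M, g) = nu (g, M \<bullet> g)"
    and p: "snd p \<in> D"
  shows "DMu mu p 1 = snd p $ 1 *\<^sub>R ds_vec nu (snd p, fst p \<bullet> snd p)"
    "DMu mu p 2 = snd p $ 2 *\<^sub>R ds_vec nu (snd p, fst p \<bullet> snd p)"
    "DMu mu p 3 = snd p $ 3 *\<^sub>R ds_vec nu (snd p, fst p \<bullet> snd p)"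
    "DMu mu p 4 = (\<chi> i. dgam 1 nu i (snd p, fst p \<bullet> snd p)) + fst p $ 1 *\<^sub>R ds_vec nu (snd p, fst p \<bullet> snd p)"
    "DMu mu p 5 = (\<chi> i. dgam 2 nu i (snd p, fst p \<bullet> snd p)) + fst p $ 2 *\<^sub>R ds_vec nu (snd p, fst p \<bullet> snd p)"
    "DMu mu p 6 = (\<chi> i. dgam 3 nu i (snd p, fst p \<bullet> snd p)) + fst p $ 3 *\<^sub>R ds_vec nu (snd p, fst p \<bullet> snd p)"
  using DMu_nu_gen[OF assms] unfolding vec_eq_iff
  by (simp_all add: sum_Basis_V e6_simps inner_axis inner_axis' axis_comps ds_vec_def dgam_def ax3_def)


lemma Cexpr_cond:
  "Cexpr g (nu (g,s)) (ds_vec nu (g,s)) (\<chi> i. dgam 1 nu i (g,s)) (\<chi> i. dgam 2 nu i (g,s)) (\<chi> i. dgam 3 nu i (g,s))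
   = g \<bullet> curl_gam nu (g, s) + nu (g, s) \<bullet> cross3 g (ds_vec nu (g, s))"
  unfolding Cexpr_def curl_gam_def cross3_def inner_vec_def sum_3
  by (simp add: algebra_simps)

theorem jacobi_back:
  fixes nu :: "(real^3) \<times> real \<Rightarrow> real^3"
  assumes D: "open D" and mus: "smooth_vec_on {p. snd p \<in> D} mu"
    and nus: "smooth_vec_on {q. fst q \<in> D} nu"
    and rel: "\<And>M g. g \<in> D \<Longrightarrow> mu (M, g) = nu (g, M \<bullet> g)"
    and cond: "\<And>g s. g \<in> D \<Longrightarrow> g \<bullet> curl_gam nu (g, s) + nu (g, s) \<bullet> cross3 g (ds_vec nu (g, s)) = 0"
  shows "jacobi_on {p. snd p \<in> D} mu"
  unfolding jacobi_on_def
proof (intro allI impI ballI)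
  fix f g h :: "(real^3) \<times> (real^3) \<Rightarrow> real" and p :: "(real^3) \<times> (real^3)"
  assume fgh: "smooth_on {p. snd p \<in> D} f \<and> smooth_on {p. snd p \<in> D} g \<and> smooth_on {p. snd p \<in> D} h"
    and p: "p \<in> {p. snd p \<in> D}"
  have pD: "snd p \<in> D" using p by simp
  have mup: "mu p = nu (snd p, fst p \<bullet> snd p)" using rel[OF pD, of "fst p"] by simp
  have C0: "Cexpr (snd p) (mu p) (ds_vec nu (snd p, fst p \<bullet> snd p)) (\<chi> i. dgam 1 nu i (snd p, fst p \<bullet> snd p))
      (\<chi> i. dgam 2 nu i (snd p, fst p \<bullet> snd p)) (\<chi> i. dgam 3 nu i (snd p, fst p \<bullet> snd p)) = 0"
    unfolding mup Cexpr_cond using cond[OF pD] .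
  have J0: "Jc mu p a b c = 0" if "a \<in> {1..6}" "b \<in> {1..6}" "c \<in> {1..6}" for a b c
    using Jc_form[OF DMu_nu[OF D nus rel pD] that] C0 by simp
  show "pbracket mu f (pbracket mu g h) p + pbracket mu g (pbracket mu h f) p + pbracket mu h (pbracket mu f g) p = 0"
    unfolding jacobiator_expand[OF open_Omega[OF D] p mus fgh[THEN conjunct1] fgh[THEN conjunct2, THEN conjunct1]
        fgh[THEN conjunct2, THEN conjunct2]]
    by (simp add: J0)
qed

lemma dirderiv_inner: "dirderiv b (\<lambda>x. x \<bullet> v) y = b \<bullet> v"
proof -
  have "((\<lambda>t. (y + t *\<^sub>R b) \<bullet> v) has_real_derivative b \<bullet> v) (at 0)"
    by (auto simp: inner_add_left intro!: derivative_eq_intros)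
  then show ?thesis unfolding dirderiv_def by (rule DERIV_imp_deriv)
qed

lemma e6_inner: "i \<in> {1..6} \<Longrightarrow> a \<in> {1..6} \<Longrightarrow> e6 i \<bullet> e6 a = (if i = a then 1 else 0)"
  unfolding in6 by (elim disjE) (simp_all add: e6_simps inner_axis inner_axis' axis_comps)

lemma jacobi_coords:
  assumes D: "open D" and mus: "smooth_vec_on {p. snd p \<in> D} mu"
    and J: "jacobi_on {p. snd p \<in> D} mu" and p: "snd p \<in> D"
    and abc: "a \<in> {1..6}" "b \<in> {1..6}" "c \<in> {1..6}"
  shows "Jc mu p a b c = 0"
proof -
  let ?x = "\<lambda>a q. q \<bullet> e6 a"
  have sm: "smooth_on {p. snd p \<in> D} (?x k)" for k by (rule smooth_on_inner)
  have gr: "grad6 (?x k) p i = (if i = k then 1 else 0)" if "i \<in> {1..6}" "k \<in> {1..6}" for i k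
    unfolding grad6_def dirderiv_inner using e6_inner[OF that] .
  have "pbracket mu (?x a) (pbracket mu (?x b) (?x c)) p + pbracket mu (?x b) (pbracket mu (?x c) (?x a)) p
      + pbracket mu (?x c) (pbracket mu (?x a) (?x b)) p = 0"
    using J p sm unfolding jacobi_on_def by blast
  moreover have "pbracket mu (?x a) (pbracket mu (?x b) (?x c)) p + pbracket mu (?x b) (pbracket mu (?x c) (?x a)) p
      + pbracket mu (?x c) (pbracket mu (?x a) (?x b)) p = 
      (\<Sum>a'=1..6. \<Sum>b'=1..6. \<Sum>c'=1..6. grad6 (?x a) p a' * grad6 (?x b) p b' * grad6 (?x c) p c' * Jc mu p a' b' c')"
    by (rule jacobiator_expand[OF open_Omega[OF D] _ mus sm sm sm]) (use p in simp)
  ultimately have "(\<Sum>a'=1..6. \<Sum>b'=1..6. \<Sum>c'=1..6. grad6 (?x a) p a' * grad6 (?x b) p b' * grad6 (?x c) p c' * Jc mu p a' b' c') = 0"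
    by simp
  moreover have "(\<Sum>a'=1..6. \<Sum>b'=1..6. \<Sum>c'=1..6. grad6 (?x a) p a' * grad6 (?x b) p b' * grad6 (?x c) p c' * Jc mu p a' b' c')
     = (\<Sum>a'=1..6. \<Sum>b'=1..6. \<Sum>c'=1..6. (if a' = a then 1 else 0) * (if b' = b then 1 else 0) * (if c' = c then 1 else 0) * Jc mu p a' b' c')"
    using gr abc by (intro sum.cong refl) simp
  moreover have "\<dots> = Jc mu p a b c"
  proof -
    have dl: "(\<Sum>i=1..6. (if i = k then 1 else 0) * (F i::real)) = F k" if "k \<in> {1..6}" for k :: nat and F
    proof -
      have "(\<lambda>i. (if i = k then 1 else 0) * F i) = (\<lambda>i. if i = k then F k else 0)" by auto
      then show ?thesis using that by (simp only: sum.delta finite_atLeastAtMost if_True)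
    qed
    have "(\<Sum>a'=1..6. \<Sum>b'=1..6. \<Sum>c'=1..6. (if a' = a then 1 else 0) * (if b' = b then 1 else 0) * (if c' = c then 1 else 0) * Jc mu p a' b' c')
      = (\<Sum>a'=1..6. (if a' = a then 1 else 0) * (\<Sum>b'=1..6. (if b' = b then 1 else 0) * (\<Sum>c'=1..6. (if c' = c then 1 else 0) * Jc mu p a' b' c')))"
      by (simp only: sum_distrib_left mult.assoc)
    also have "\<dots> = Jc mu p a b c" using abc by (simp only: dl)
    finally show ?thesis .
  qed
  ultimately show ?thesis by simp
qed

lemma Jc_par_form:
  shows "Jc mu p 1 2 4 = DMu mu p 2 $ 3 * snd p $ 3 - DMu mu p 3 $ 3 * snd p $ 2"
    "Jc mu p 1 2 5 = - DMu mu p 1 $ 3 * snd p $ 3 + DMu mu p 3 $ 3 * snd p $ 1"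
    "Jc mu p 1 2 6 = DMu mu p 1 $ 3 * snd p $ 2 - DMu mu p 2 $ 3 * snd p $ 1"
    "Jc mu p 1 3 4 = - DMu mu p 2 $ 2 * snd p $ 3 + DMu mu p 3 $ 2 * snd p $ 2"
    "Jc mu p 1 3 5 = DMu mu p 1 $ 2 * snd p $ 3 - DMu mu p 3 $ 2 * snd p $ 1"
    "Jc mu p 1 3 6 = - DMu mu p 1 $ 2 * snd p $ 2 + DMu mu p 2 $ 2 * snd p $ 1"
    "Jc mu p 2 3 4 = DMu mu p 2 $ 1 * snd p $ 3 - DMu mu p 3 $ 1 * snd p $ 2"
    "Jc mu p 2 3 5 = - DMu mu p 1 $ 1 * snd p $ 3 + DMu mu p 3 $ 1 * snd p $ 1"
    "Jc mu p 2 3 6 = DMu mu p 1 $ 1 * snd p $ 2 - DMu mu p 2 $ 1 * snd p $ 1"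
  unfolding Jc_def sum6 dPi_def
  by (simp_all add: PiMat_def Let_def e6_simps axis_comps algebra_simps)


lemma alg3: fixes g1 g2 g3 d1 d2 d3 w1 w2 w3 :: real
  assumes "g1 \<noteq> 0 \<or> g2 \<noteq> 0 \<or> g3 \<noteq> 0" "g3*d2 = g2*d3" "g3*d1 = g1*d3" "g2*d1 = g1*d2" "w1*g1 + w2*g2 + w3*g3 = 0"
  shows "w1*d1 + w2*d2 + w3*d3 = 0"
proof -
  have e1: "g1 * (w1*d1 + w2*d2 + w3*d3) = d1 * (w1*g1 + w2*g2 + w3*g3)" using assms(2-4) by algebra
  have e2: "g2 * (w1*d1 + w2*d2 + w3*d3) = d2 * (w1*g1 + w2*g2 + w3*g3)" using assms(2-4) by algebra
  have e3: "g3 * (w1*d1 + w2*d2 + w3*d3) = d3 * (w1*g1 + w2*g2 + w3*g3)" using assms(2-4) by algebra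
  show ?thesis using assms(1,5) e1 e2 e3 by auto
qed

lemma par_rel:
  assumes D: "open D" and mus: "smooth_vec_on {p. snd p \<in> D} mu"
    and J: "jacobi_on {p. snd p \<in> D} mu" and q: "snd q \<in> D"
  shows "snd q $ 3 * DMu mu q 2 $ m = snd q $ 2 * DMu mu q 3 $ m"
    "snd q $ 3 * DMu mu q 1 $ m = snd q $ 1 * DMu mu q 3 $ m"
    "snd q $ 2 * DMu mu q 1 $ m = snd q $ 1 * DMu mu q 2 $ m"
proof -
  have z: "Jc mu q a b c = 0" if "a \<in> {1..6}" "b \<in> {1..6}" "c \<in> {1..6}" for a b c
    by (rule jacobi_coords[OF D mus J q that])
  have m: "m = 1 \<or> m = 2 \<or> m = 3" using exhaust_3 by blast
  have j: "Jc mu q 1 2 4 = 0" "Jc mu q 1 2 5 = 0" "Jc mu q 1 2 6 = 0" "Jc mu q 1 3 4 = 0" "Jc mu q 1 3 5 = 0"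
    "Jc mu q 1 3 6 = 0" "Jc mu q 2 3 4 = 0" "Jc mu q 2 3 5 = 0" "Jc mu q 2 3 6 = 0"
    by (rule z; simp)+
  show "snd q $ 3 * DMu mu q 2 $ m = snd q $ 2 * DMu mu q 3 $ m"
    "snd q $ 3 * DMu mu q 1 $ m = snd q $ 1 * DMu mu q 3 $ m"
    "snd q $ 2 * DMu mu q 1 $ m = snd q $ 1 * DMu mu q 2 $ m"
    using m j unfolding Jc_par_form by (auto simp: algebra_simps)
qed

lemma mu_const:
  assumes D: "open D" and D0: "0 \<notin> D" and mus: "smooth_vec_on {p. snd p \<in> D} mu"
    and J: "jacobi_on {p. snd p \<in> D} mu" and gD: "g \<in> D" and Mg: "M \<bullet> g = M' \<bullet> g"
  shows "mu (M, g) = mu (M', g)"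
proof -
  let ?U = "{p::(real^3) \<times> (real^3). snd p \<in> D}"
  define w where "w = M' - M"
  let ?c = "\<lambda>t::real. (M + t *\<^sub>R w, g)"
  have g0: "g $ 1 \<noteq> 0 \<or> g $ 2 \<noteq> 0 \<or> g $ 3 \<noteq> 0"
  proof (rule ccontr)
    assume "\<not> ?thesis"
    then have "g = 0" unfolding vec_eq_iff using exhaust_3 by (metis zero_index)
    then show False using gD D0 by simp
  qed
  have wg: "w $ 1 * g $ 1 + w $ 2 * g $ 2 + w $ 3 * g $ 3 = 0"
    using Mg unfolding w_def inner_vec_def sum_3 by (simp add: algebra_simps)
  have cd: "(?c has_vector_derivative (w, 0)) (at t)" for t
    unfolding has_vector_derivative_def by (auto intro!: derivative_eq_intros)
  have "mu (?c 1) $ i = mu (?c 0) $ i" for i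
  proof -
    have si: "smooth_on ?U (\<lambda>p. mu p $ i)" using mus unfolding smooth_vec_on_def by auto
    have "((\<lambda>t. mu (?c t) $ i) has_real_derivative 0) (at t)" for t
    proof -
      have "((\<lambda>t. mu (?c t) $ i) has_real_derivative (\<Sum>b\<in>Basis. ((w, 0) \<bullet> b) * dirderiv b (\<lambda>p. mu p $ i) (?c t))) (at t)"
        by (rule C1_chain[OF open_Omega[OF D] _ _ _ cd]) (use gD smooth_onD_diff[OF si] smooth_onD_cont[OF smooth_onD_deriv[OF si]] in auto)
      moreover have "(\<Sum>b\<in>Basis. ((w, 0) \<bullet> b) * dirderiv b (\<lambda>p. mu p $ i) (?c t))
          = w $ 1 * DMu mu (?c t) 1 $ i + w $ 2 * DMu mu (?c t) 2 $ i + w $ 3 * DMu mu (?c t) 3 $ i"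
        unfolding sum_Basis6 sum6 DMu_def by (simp add: e6_simps inner_axis inner_axis')
      moreover have "w $ 1 * DMu mu (?c t) 1 $ i + w $ 2 * DMu mu (?c t) 2 $ i + w $ 3 * DMu mu (?c t) 3 $ i = 0"
      proof (rule alg3[of "g $ 1" "g $ 2" "g $ 3"])
        show "g $ 1 \<noteq> 0 \<or> g $ 2 \<noteq> 0 \<or> g $ 3 \<noteq> 0" by (rule g0)
        show "w $ 1 * g $ 1 + w $ 2 * g $ 2 + w $ 3 * g $ 3 = 0" by (rule wg)
        have q: "snd (?c t) \<in> D" using gD by simp
        show "g $ 3 * DMu mu (?c t) 2 $ i = g $ 2 * DMu mu (?c t) 3 $ i"
          "g $ 3 * DMu mu (?c t) 1 $ i = g $ 1 * DMu mu (?c t) 3 $ i"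
          "g $ 2 * DMu mu (?c t) 1 $ i = g $ 1 * DMu mu (?c t) 2 $ i"
          using par_rel[OF D mus J q, of i] by simp_all
      qed
      ultimately show ?thesis by simp
    qed
    then show ?thesis using DERIV_isconst_all by blast
  qed
  then show ?thesis unfolding vec_eq_iff w_def by simp
qed


definition phiN :: "(real^3) \<times> real \<Rightarrow> (real^3) \<times> (real^3)" where
  "phiN q = ((snd q / (fst q \<bullet> fst q)) *\<^sub>R fst q, fst q)"

lemma sq3: "x \<bullet> x = x$1*x$1 + x$2*x$2 + x$3*(x$3::real)" for x :: "real^3"
  by (simp add: inner_vec_def sum_3)

lemma Basis_p6_cases:
  assumes "(b::(real^3) \<times> (real^3)) \<in> Basis"
  shows "b = (axis 1 1, 0) \<or> b = (axis 2 1, 0) \<or> b = (axis 3 1, 0) \<or> b = (0, axis 1 1) \<or> b = (0, axis 2 1) \<or> b = (0, axis 3 1)"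
  using assms unfolding Basis_prod_def Basis_vec3 by auto

lemma phiN_smooth:
  assumes D: "open D" and D0: "0 \<notin> D" and b: "b \<in> Basis"
  shows "smooth_on {q. fst q \<in> D} (\<lambda>q. phiN q \<bullet> b)"
proof -
  let ?V = "{q::(real^3) \<times> real. fst q \<in> D}"
  let ?S = "SC ?V (\<lambda>x. x) (UNIV :: ((real^3) \<times> real) set)"
  have co: "(\<lambda>q. q \<bullet> v) \<in> ?S" for v by (rule SC.base[OF smooth_on_inner])
  have c3: "(\<lambda>q::(real^3) \<times> real. q \<bullet> (axis j 1, 0)) = (\<lambda>q. fst q $ j)" for j
    by (auto simp: fun_eq_iff inner_prod_def inner_axis)
  have cs: "(\<lambda>q::(real^3) \<times> real. q \<bullet> (0, 1)) = (\<lambda>q. snd q)"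
    by (auto simp: fun_eq_iff inner_prod_def)
  have fj: "(\<lambda>q::(real^3) \<times> real. fst q $ j) \<in> ?S" for j using co[of "(axis j 1, 0)"] unfolding c3 .
  have sn: "(\<lambda>q::(real^3) \<times> real. snd q) \<in> ?S" using co[of "(0, 1)"] unfolding cs .
  have nn: "(\<lambda>q::(real^3) \<times> real. fst q $ 1 * fst q $ 1 + fst q $ 2 * fst q $ 2 + fst q $ 3 * fst q $ 3) \<in> ?S"
    by (intro SC.add SC.mult fj)
  have nz: "\<forall>x\<in>?V. fst x $ 1 * fst x $ 1 + fst x $ 2 * fst x $ 2 + fst x $ 3 * fst x $ 3 \<noteq> 0"
  proof
    fix x assume "x \<in> ?V"
    then have "fst x \<noteq> 0" using D0 by auto
    then have "fst x \<bullet> fst x \<noteq> 0" by simp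
    then show "fst x $ 1 * fst x $ 1 + fst x $ 2 * fst x $ 2 + fst x $ 3 * fst x $ 3 \<noteq> 0"
      unfolding inner_vec_def sum_3 by simp
  qed
  have ij: "(\<lambda>q::(real^3) \<times> real. snd q * fst q $ j * inverse (fst q $ 1 * fst q $ 1 + fst q $ 2 * fst q $ 2 + fst q $ 3 * fst q $ 3)) \<in> ?S" for j
    by (intro SC.mult SC.inv sn fj nn nz)
  have ax: "(\<lambda>q. phiN q \<bullet> (axis j 1, 0)) \<in> ?S" for j
    by (rule SC.cong[OF ij[of j]]) (auto simp: phiN_def inner_axis sq3 divide_inverse)
  have ax2: "(\<lambda>q. phiN q \<bullet> (0, axis j 1)) \<in> ?S" for j
    using fj[of j] by (simp add: phiN_def inner_axis)
  have mem: "(\<lambda>q. phiN q \<bullet> b) \<in> ?S"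
    using Basis_p6_cases[OF b] ax ax2 by auto
  show ?thesis
    by (rule SC_smooth[OF open_V[OF D] open_UNIV _ _ mem]) (use smooth_on_inner in auto)
qed


theorem mainTheorem1:
  fixes D :: "(real^3) set" and mu :: "(real^3) \<times> (real^3) \<Rightarrow> real^3"
  assumes "open D" and "0 \<notin> D"
    and "smooth_vec_on {p. snd p \<in> D} mu"
  shows "jacobi_on {p. snd p \<in> D} mu \<longleftrightarrow>
    (\<exists>nu :: (real^3) \<times> real \<Rightarrow> real^3.
        smooth_vec_on {q. fst q \<in> D} nu \<and>
        (\<forall>M g. g \<in> D \<longrightarrow> mu (M, g) = nu (g, M \<bullet> g)) \<and>
        (\<forall>g s. g \<in> D \<longrightarrow>
           g \<bullet> curl_gam nu (g, s) + nu (g, s) \<bullet> cross3 g (ds_vec nu (g, s)) = 0))"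
proof
  assume J: "jacobi_on {p. snd p \<in> D} mu"
  define nu where "nu = (\<lambda>q. mu (phiN q))"
  have nus: "smooth_vec_on {q. fst q \<in> D} nu"
    unfolding smooth_vec_on_def nu_def
  proof
    fix i
    have sk: "smooth_on {p. snd p \<in> D} (\<lambda>p. mu p $ i)" using assms(3) by (simp add: smooth_vec_on_def)
    have mem: "(\<lambda>q. mu (phiN q) $ i) \<in> SC {q. fst q \<in> D} phiN {p. snd p \<in> D}"
      using SC.comp[OF sk, where V="{q. fst q \<in> D}" and \<phi>=phiN] by simp
    have \<phi>W: "\<And>x. x \<in> {q. fst q \<in> D} \<Longrightarrow> phiN x \<in> {p. snd p \<in> D}" by (simp add: phiN_def)
    have \<phi>s: "\<And>b'. b' \<in> Basis \<Longrightarrow> smooth_on {q. fst q \<in> D} (\<lambda>x. phiN x \<bullet> b')"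
      by (rule phiN_smooth[OF assms(1,2)])
    show "smooth_on {q. fst q \<in> D} (\<lambda>q. mu (phiN q) $ i)"
      by (rule SC_smooth[OF open_V[OF assms(1)] open_Omega[OF assms(1)] \<phi>W \<phi>s mem])
  qed
  have rel: "mu (M, g) = nu (g, M \<bullet> g)" if gD: "g \<in> D" for M g
  proof -
    have "g \<noteq> 0" using gD assms(2) by auto
    then have gg: "g \<bullet> g \<noteq> 0" by simp
    have "M \<bullet> g = ((M \<bullet> g) / (g \<bullet> g)) *\<^sub>R g \<bullet> g" using gg by simp
    then have "mu (M, g) = mu (((M \<bullet> g) / (g \<bullet> g)) *\<^sub>R g, g)" by (rule mu_const[OF assms(1,2,3) J gD])
    then show ?thesis by (simp add: nu_def phiN_def)
  qed
  have cond: "g \<bullet> curl_gam nu (g, s) + nu (g, s) \<bullet> cross3 g (ds_vec nu (g, s)) = 0" if gD: "g \<in> D" for g s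
  proof -
    have "g \<noteq> 0" using gD assms(2) by auto
    then have gg: "g \<bullet> g \<noteq> 0" by simp
    define p where "p = ((s / (g \<bullet> g)) *\<^sub>R g, g)"
    have pD: "snd p \<in> D" using gD by (simp add: p_def)
    have ps: "fst p \<bullet> snd p = s" using gg by (simp add: p_def)
    have pg: "snd p = g" by (simp add: p_def)
    have ps': "fst p \<bullet> g = s" using ps pg by simp
    have mup: "mu p = nu (g, s)" using rel[OF gD, of "fst p"] ps pg by (metis prod.collapse)
    have "Jc mu p 1 2 3 = 0" by (rule jacobi_coords[OF assms(1,3) J pD]) auto
    moreover have "Jc mu p 1 2 3 = - Cexpr (snd p) (mu p) (ds_vec nu (snd p, fst p \<bullet> snd p))
        (\<chi> i. dgam 1 nu i (snd p, fst p \<bullet> snd p)) (\<chi> i. dgam 2 nu i (snd p, fst p \<bullet> snd p))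
        (\<chi> i. dgam 3 nu i (snd p, fst p \<bullet> snd p))"
      using Jc_form[OF DMu_nu[OF assms(1) nus rel pD], of 1 2 3] by simp
    ultimately have "Cexpr g (nu (g, s)) (ds_vec nu (g, s)) (\<chi> i. dgam 1 nu i (g, s)) (\<chi> i. dgam 2 nu i (g, s))
        (\<chi> i. dgam 3 nu i (g, s)) = 0"
      unfolding pg ps' mup by simp
    then show ?thesis unfolding Cexpr_cond .
  qed
  show "\<exists>nu :: (real^3) \<times> real \<Rightarrow> real^3.
        smooth_vec_on {q. fst q \<in> D} nu \<and>
        (\<forall>M g. g \<in> D \<longrightarrow> mu (M, g) = nu (g, M \<bullet> g)) \<and>
        (\<forall>g s. g \<in> D \<longrightarrow>
           g \<bullet> curl_gam nu (g, s) + nu (g, s) \<bullet> cross3 g (ds_vec nu (g, s)) = 0)"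
    using nus rel cond by blast
next
  assume "\<exists>nu :: (real^3) \<times> real \<Rightarrow> real^3.
        smooth_vec_on {q. fst q \<in> D} nu \<and>
        (\<forall>M g. g \<in> D \<longrightarrow> mu (M, g) = nu (g, M \<bullet> g)) \<and>
        (\<forall>g s. g \<in> D \<longrightarrow>
           g \<bullet> curl_gam nu (g, s) + nu (g, s) \<bullet> cross3 g (ds_vec nu (g, s)) = 0)"
  then obtain nu :: "(real^3) \<times> real \<Rightarrow> real^3" where nus: "smooth_vec_on {q. fst q \<in> D} nu"
    and rel: "\<And>M g. g \<in> D \<Longrightarrow> mu (M, g) = nu (g, M \<bullet> g)"
    and cond: "\<And>g s. g \<in> D \<Longrightarrow> g \<bullet> curl_gam nu (g, s) + nu (g, s) \<bullet> cross3 g (ds_vec nu (g, s)) = 0"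
    by blast
  show "jacobi_on {p. snd p \<in> D} mu" by (rule jacobi_back[OF assms(1,3) nus rel cond])
qed


end
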